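(* Consider on $\mathcal D=[0,+\infty)^3$ the system $$\dot E=\beta_E F\Big(1-\frac{E}{K}\Big)-(\nu_E+\delta_E)E,\qquad \dot M=(1-\nu)\nu_E E-\delta_M M,\qquad \dot F=\nu\nu_E E-\delta_F F ,$$ and assume $\mathcal R_0>1$. Then the system has exactly two equilibria in $\mathcal D$, namely $\mathbf 0$ and $x^*=(E^*,M^*,F^* )^T$ with $$E^*=K\Big(1-\frac1{\mathcal R_0}\Big),\quad M^*=\frac{(1-\nu)\nu_E}{\delta_M}E^*,\quad F^*=\frac{\nu\nu_E}{\delta_F}E^*.$$ Moreover, $x^*$ is stable in $\mathcal D$ and its basin of attraction is $\mathcal D\setminus\{(E,M,F)^T\in[0,+\infty)^3: E=F=0\}$ (i.e. every solution with initial condition in $\mathcal D$ and $(E(0),F(0))\neq(0,0)$ converges to $x^*$), while $\mathbf 0$ is unstable in $\mathcal D$ and the nonnegative $M$-axis $\{E=F=0,\ M\ge0\}$ is a stable manifold of $\mathbf 0$ (solutions starting on it converge to $\mathbf 0$).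
   Context: Parameters: $\beta_E,\nu_E,\delta_E,\delta_M,\delta_F,K>0$ and $\nu\in(0,1)$. $\mathcal R_0:=\dfrac{\beta_E\nu\nu_E}{\delta_F(\nu_E+\delta_E)}$. An equilibrium $x_e\in\mathcal D$ is stable in $\mathcal D$ if for every $\varepsilon>0$ there is $\delta>0$ such that every solution with $x(0)\in\mathcal D$, $\|x(0)-x_e\|<\delta$ satisfies $\|x(t)-x_e\|<\varepsilon$ for all $t>0$; it is unstable in $\mathcal D$ if it is not stable in $\mathcal D$. *)

theory Defs
  imports "HOL-Analysis.Analysis"
begin

text \<open>States are triples (E, M, F) :: real \<times> real \<times> real; the product norm on this
type is the Euclidean norm.\<close>

type_synonym state = "real \<times> real \<times> real"

definition mosq_vf ::
  "real \<Rightarrow> real \<Rightarrow> real \<Rightarrow> real \<Rightarrow> real \<Rightarrow> real \<Rightarrow> real \<Rightarrow> state \<Rightarrow> state" where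
  "mosq_vf \<beta>E \<nu>E \<delta>E \<delta>M \<delta>F K \<nu> x =
     (case x of (E, M, F) \<Rightarrow>
       (\<beta>E * F * (1 - E / K) - (\<nu>E + \<delta>E) * E,
        (1 - \<nu>) * \<nu>E * E - \<delta>M * M,
        \<nu> * \<nu>E * E - \<delta>F * F))"

definition R0 :: "real \<Rightarrow> real \<Rightarrow> real \<Rightarrow> real \<Rightarrow> real \<Rightarrow> real" where
  "R0 \<beta>E \<nu>E \<delta>E \<delta>F \<nu> = (\<beta>E * \<nu> * \<nu>E) / (\<delta>F * (\<nu>E + \<delta>E))"

definition domD :: "state set" where
  "domD = {(E, M, F). E \<ge> 0 \<and> M \<ge> 0 \<and> F \<ge> 0}"

definition is_solution :: "(state \<Rightarrow> state) \<Rightarrow> (real \<Rightarrow> state) \<Rightarrow> bool" where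
  "is_solution f x \<longleftrightarrow>
     (\<forall>t\<ge>0. (x has_vector_derivative f (x t)) (at t within {0..}))"

definition is_equilibrium :: "(state \<Rightarrow> state) \<Rightarrow> state set \<Rightarrow> state \<Rightarrow> bool" where
  "is_equilibrium f S xe \<longleftrightarrow> xe \<in> S \<and> f xe = 0"

definition stable_in :: "(state \<Rightarrow> state) \<Rightarrow> state set \<Rightarrow> state \<Rightarrow> bool" where
  "stable_in f S xe \<longleftrightarrow>
     (\<forall>\<epsilon>>0. \<exists>\<delta>>0. \<forall>x. is_solution f x \<and> x 0 \<in> S \<and> dist (x 0) xe < \<delta> \<longrightarrow>
        (\<forall>t>0. dist (x t) xe < \<epsilon>))"

end

theory Submission
  imports Defs
begin

lemma mvt0:
  fixes y y' :: "real \<Rightarrow> real"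
  assumes d: "\<And>t. t \<ge> 0 \<Longrightarrow> (y has_real_derivative y' t) (at t within {0..})"
    and ab: "0 \<le> a" "a < b"
  shows "\<exists>\<xi>. a < \<xi> \<and> \<xi> < b \<and> y b - y a = (b - a) * y' \<xi>"
proof -
  have c0: "continuous_on {0..} y"
    unfolding continuous_on_eq_continuous_within using d DERIV_continuous by (metis atLeast_iff)
  have c: "continuous_on {a..b} y"
    by (rule continuous_on_subset[OF c0]) (use ab in auto)
  have dd: "(y has_real_derivative y' x) (at x)" if "a < x" "x < b" for x
  proof -
    have "x \<in> interior {0::real..}" using ab that by auto
    then have "at x within {0..} = at x" by (rule at_within_interior)
    then show ?thesis using d[of x] that ab by simp
  qed
  have dd': "(y has_derivative (\<lambda>h. y' x * h)) (at x)" if "a < x" "x < b" for x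
    using dd[OF that] unfolding has_field_derivative_def by simp
  obtain z where z: "a < z" "z < b" "y b - y a = y' z * (b - a)"
    using mvt[OF ab(2) c dd'] by blast
  then show ?thesis by (auto simp: mult.commute)
qed

lemma barrier_ge:
  fixes y y' :: "real \<Rightarrow> real"
  assumes d: "\<And>t. t \<ge> 0 \<Longrightarrow> (y has_real_derivative y' t) (at t within {0..})"
    and t0: "t0 \<ge> 0" "y t0 \<ge> B"
    and out: "\<And>t. t \<ge> t0 \<Longrightarrow> y t < B \<Longrightarrow> y' t \<ge> 0"
  shows "\<And>t. t \<ge> t0 \<Longrightarrow> y t \<ge> B"
proof (rule ccontr)
  fix t2 assume t2: "t2 \<ge> t0" "\<not> B \<le> y t2"
  have cont: "continuous_on {0..} y"
    unfolding continuous_on_eq_continuous_within using d DERIV_continuous by (metis atLeast_iff)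
  define S where "S = {t \<in> {t0..t2}. B \<le> y t}"
  have "closed S" unfolding S_def
    apply (rule continuous_on_closed_Collect_le)
      apply (rule continuous_on_const)
     apply (rule continuous_on_subset[OF cont]) using t0(1) apply auto[1]
    by simp
  moreover have "S \<noteq> {}" using t0 t2 unfolding S_def by auto
  moreover have "bdd_above S" unfolding S_def by (auto intro: bdd_aboveI[of _ t2])
  ultimately have sS: "Sup S \<in> S" by (rule closed_contains_Sup[rotated 2])
  define s where "s = Sup S"
  have s: "t0 \<le> s" "s \<le> t2" "B \<le> y s" using sS unfolding s_def S_def by auto
  have "s \<noteq> t2" using s t2 by auto
  hence "s < t2" using s by auto
  have above: "\<And>t. s < t \<Longrightarrow> t \<le> t2 \<Longrightarrow> y t < B"
  proof (rule ccontr)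
    fix t assume "s < t" "t \<le> t2" "\<not> y t < B"
    hence "t \<in> S" unfolding S_def using s by auto
    hence "t \<le> s" unfolding s_def using \<open>bdd_above S\<close> by (simp add: cSup_upper)
    thus False using \<open>s < t\<close> by auto
  qed
  obtain \<xi> where xi: "s < \<xi>" "\<xi> < t2" "y t2 - y s = (t2 - s) * y' \<xi>"
    using mvt0[OF d, of s t2] \<open>s < t2\<close> s t0 by auto
  have "y' \<xi> \<ge> 0" using out[of \<xi>] above[of \<xi>] xi s by auto
  hence "(t2 - s) * y' \<xi> \<ge> 0" using \<open>s < t2\<close> by simp
  hence "y t2 \<ge> y s" using xi by linarith
  thus False using s t2 by auto
qed

lemma barrier_le:
  fixes y y' :: "real \<Rightarrow> real"
  assumes d: "\<And>t. t \<ge> 0 \<Longrightarrow> (y has_real_derivative y' t) (at t within {0..})"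
    and t0: "t0 \<ge> 0" "y t0 \<le> B"
    and out: "\<And>t. t \<ge> t0 \<Longrightarrow> y t > B \<Longrightarrow> y' t \<le> 0"
    and t: "t \<ge> t0"
  shows "y t \<le> B"
proof -
  have d': "((\<lambda>t. - y t) has_real_derivative - y' t) (at t within {0..})" if "t \<ge> 0" for t
    using DERIV_minus[OF d[OF that]] .
  have "- y t \<ge> - B"
    by (rule barrier_ge[where y="\<lambda>t. - y t" and y'="\<lambda>t. - y' t", OF d' t0(1)]) (use t0 out t in auto)
  thus ?thesis by simp
qed

lemma nonincr:
  fixes y y' :: "real \<Rightarrow> real"
  assumes d: "\<And>t. t \<ge> 0 \<Longrightarrow> (y has_real_derivative y' t) (at t within {0..})"
    and neg: "\<And>t. t \<ge> t0 \<Longrightarrow> y' t \<le> 0"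
    and st: "0 \<le> t0" "t0 \<le> s" "s \<le> t"
  shows "y t \<le> y s"
proof (cases "s = t")
  case False
  then obtain \<xi> where "s < \<xi>" "\<xi> < t" "y t - y s = (t - s) * y' \<xi>"
    using mvt0[OF d, of s t] st by auto
  moreover have "y' \<xi> \<le> 0" using neg \<open>s < \<xi>\<close> st by auto
  ultimately have "y t - y s \<le> 0" using st by (simp add: mult_nonneg_nonpos)
  thus ?thesis by simp
qed simp

lemma gronwall0:
  fixes n n' :: "real \<Rightarrow> real"
  assumes d: "\<And>t. t \<ge> 0 \<Longrightarrow> (n has_real_derivative n' t) (at t within {0..})"
    and n0: "n 0 = 0" and nn: "\<And>t. 0 \<le> t \<Longrightarrow> t \<le> T \<Longrightarrow> n t \<ge> 0"
    and b: "\<And>t. 0 \<le> t \<Longrightarrow> t \<le> T \<Longrightarrow> n' t \<le> C * n t"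
    and t: "0 \<le> t" "t \<le> T"
  shows "n t = 0"
proof -
  define m where "m t = exp (- C * t) * n t" for t
  define m' where "m' t = (- C * exp (- C * t)) * n t + exp (- C * t) * n' t" for t
  have dm: "(m has_real_derivative m' t) (at t within {0..})" if "t \<ge> 0" for t
  proof -
    have e: "((\<lambda>t. exp (- C * t)) has_real_derivative (- C * exp (- C * t))) (at t within {0..})"
      by (auto intro!: derivative_eq_intros)
    show ?thesis unfolding m_def m'_def
      using DERIV_mult[OF e d[OF that]] by (simp add: algebra_simps)
  qed
  have "m t \<le> m 0"
  proof (cases "t = 0")
    case False
    then obtain \<xi> where xi: "0 < \<xi>" "\<xi> < t" "m t - m 0 = (t - 0) * m' \<xi>"
      using mvt0[OF dm, of 0 t] t by auto
    have "m' \<xi> = exp (- C * \<xi>) * (n' \<xi> - C * n \<xi>)" unfolding m'_def by (simp add: algebra_simps)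
    also have "\<dots> \<le> 0" using b[of \<xi>] xi t by (intro mult_nonneg_nonpos) auto
    finally have "m' \<xi> \<le> 0" .
    hence "t * m' \<xi> \<le> 0" using t by (simp add: mult_nonneg_nonpos)
    thus ?thesis using xi by simp
  qed simp
  hence "exp (- C * t) * n t \<le> 0" unfolding m_def using n0 by simp
  hence "n t \<le> 0" by (simp add: mult_le_0_iff)
  thus ?thesis using nn[OF t] by simp
qed

lemma eventually_below:
  fixes y y' :: "real \<Rightarrow> real"
  assumes d: "\<And>t. t \<ge> 0 \<Longrightarrow> (y has_real_derivative y' t) (at t within {0..})"
    and T: "T \<ge> 0" and k: "\<kappa> > 0"
    and out: "\<And>t. t \<ge> T \<Longrightarrow> y t > B \<Longrightarrow> y' t \<le> - \<kappa>"
  shows "\<exists>T1. \<forall>t\<ge>T1. y t \<le> B"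
proof -
  define D where "D = \<bar>y T - B\<bar> / \<kappa> + 1"
  have D: "D > 0" unfolding D_def using k by (simp add: add_nonneg_pos)
  have "\<exists>t1\<in>{T..T+D}. y t1 \<le> B"
  proof (rule ccontr)
    assume "\<not> ?thesis"
    hence above: "\<And>t. T \<le> t \<Longrightarrow> t \<le> T + D \<Longrightarrow> y t > B" by force
    obtain \<xi> where xi: "T < \<xi>" "\<xi> < T + D" "y (T + D) - y T = (T + D - T) * y' \<xi>"
      using mvt0[OF d, of T "T + D"] T D by auto
    have "y' \<xi> \<le> - \<kappa>" using out[of \<xi>] above[of \<xi>] xi by auto
    hence "D * y' \<xi> \<le> D * (- \<kappa>)" using D by (intro mult_left_mono) auto
    hence "y (T + D) \<le> y T - D * \<kappa>" using xi by simp
    moreover have "D * \<kappa> = \<bar>y T - B\<bar> + \<kappa>" unfolding D_def using k by (simp add: field_simps)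
    ultimately have "y (T + D) < B" using k by linarith
    thus False using above[of "T + D"] D by auto
  qed
  then obtain t1 where t1: "T \<le> t1" "y t1 \<le> B" by auto
  have "y t \<le> B" if "t \<ge> t1" for t
  proof (rule barrier_le[OF d _ t1(2) _ that])
    show "0 \<le> t1" using T t1 by simp
  next
    fix t assume a: "t1 \<le> t" "B < y t"
    have "y' t \<le> - \<kappa>" using out[of t] a t1 by simp
    thus "y' t \<le> 0" using k by simp
  qed
  thus ?thesis by blast
qed

lemma vf_fst: "fst (mosq_vf \<beta>E \<nu>E \<delta>E \<delta>M \<delta>F K \<nu> z) = \<beta>E * snd (snd z) * (1 - fst z / K) - (\<nu>E + \<delta>E) * fst z"
  by (cases z) (simp add: mosq_vf_def)
lemma vf_fst_snd: "fst (snd (mosq_vf \<beta>E \<nu>E \<delta>E \<delta>M \<delta>F K \<nu> z)) = (1 - \<nu>) * \<nu>E * fst z - \<delta>M * fst (snd z)"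
  by (cases z) (simp add: mosq_vf_def)
lemma vf_snd_snd: "snd (snd (mosq_vf \<beta>E \<nu>E \<delta>E \<delta>M \<delta>F K \<nu> z)) = \<nu> * \<nu>E * fst z - \<delta>F * snd (snd z)"
  by (cases z) (simp add: mosq_vf_def)

lemma deriv_cont:
  fixes y y' :: "real \<Rightarrow> real"
  assumes d: "\<And>t. t \<ge> 0 \<Longrightarrow> (y has_real_derivative y' t) (at t within {0..})"
  shows "continuous_on {0..} y"
  unfolding continuous_on_eq_continuous_within using d DERIV_continuous by (metis atLeast_iff)

lemma bounded_on_interval:
  fixes y :: "real \<Rightarrow> real"
  assumes "continuous_on {0..} y"
  shows "\<exists>R\<ge>0. \<forall>t\<in>{0..T}. \<bar>y t\<bar> \<le> R"
proof -
  have "compact (y ` {0..T})"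
    by (rule compact_continuous_image) (auto intro: continuous_on_subset[OF assms])
  then obtain R where "\<forall>v\<in>y ` {0..T}. norm v \<le> R" using compact_imp_bounded bounded_iff by metis
  hence "\<forall>t\<in>{0..T}. \<bar>y t\<bar> \<le> max R 0" by auto
  thus ?thesis by (intro exI[of _ "max R 0"]) auto
qed

lemma sq_div_self: "x * x / x = (x::real)" by (cases "x = 0") auto

lemma negsq_quot: "- \<bar>w\<bar> \<le> ((min w 0)\<^sup>2 - (min 0 0)\<^sup>2) / (w - 0) \<and> ((min w 0)\<^sup>2 - (min 0 0)\<^sup>2) / (w - 0) \<le> \<bar>w::real\<bar>"
proof (cases "w \<le> 0")
  case True
  hence eq: "((min w 0)\<^sup>2 - (min 0 0)\<^sup>2) / (w - 0) = w" by (simp add: power2_eq_square sq_div_self)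
  show ?thesis by (simp only: eq) (auto simp: abs_if)
next
  case False
  hence eq: "((min w 0)\<^sup>2 - (min 0 0)\<^sup>2) / (w - 0) = 0" by simp
  show ?thesis by (simp only: eq) (auto simp: abs_if)
qed

lemma DERIV_negsq: "((\<lambda>z::real. (min z 0)\<^sup>2) has_real_derivative 2 * min z 0) (at z)"
proof (cases "z < 0")
  case True
  have ev: "\<forall>\<^sub>F w in nhds z. (min w 0)\<^sup>2 = w\<^sup>2"
    using eventually_nhds_in_open[of "{..<0}" z] True
    by (auto elim!: eventually_mono)
  have "((\<lambda>w. w\<^sup>2) has_real_derivative 2 * z) (at z)"
    by (auto intro!: derivative_eq_intros)
  hence "((\<lambda>w. (min w 0)\<^sup>2) has_real_derivative 2 * z) (at z)"
    using DERIV_cong_ev[OF refl ev refl] by simp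
  thus ?thesis using True by simp
next
  case False
  show ?thesis
  proof (cases "z > 0")
    case True
    have ev: "\<forall>\<^sub>F w in nhds z. (min w 0)\<^sup>2 = 0"
      using eventually_nhds_in_open[of "{0<..}" z] True
      by (auto elim!: eventually_mono)
    have "((\<lambda>w. 0::real) has_real_derivative 0) (at z)" by simp
    hence "((\<lambda>w. (min w 0)\<^sup>2) has_real_derivative 0) (at z)"
      using DERIV_cong_ev[OF refl ev refl] by simp
    thus ?thesis using True by simp
  next
    case False
    with \<open>\<not> z < 0\<close> have z: "z = 0" by simp
    have "((\<lambda>w. (min w 0)\<^sup>2) has_real_derivative 0) (at 0)"
      unfolding has_field_derivative_iff
    proof (rule tendsto_sandwich[where f="\<lambda>w. - \<bar>w\<bar>" and h="\<lambda>w. \<bar>w\<bar>"])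
      show "\<forall>\<^sub>F w::real in at 0. - \<bar>w\<bar> \<le> ((min w 0)\<^sup>2 - (min 0 0)\<^sup>2) / (w - 0)"
        by (intro always_eventually allI) (rule conjunct1[OF negsq_quot])
      show "\<forall>\<^sub>F w::real in at 0. ((min w 0)\<^sup>2 - (min 0 0)\<^sup>2) / (w - 0) \<le> \<bar>w\<bar>"
        by (intro always_eventually allI) (rule conjunct2[OF negsq_quot])
      show "((\<lambda>w::real. \<bar>w\<bar>) \<longlongrightarrow> 0) (at 0)"
        using tendsto_rabs[OF tendsto_ident_at[of 0 UNIV]] by simp
      show "((\<lambda>w::real. - \<bar>w\<bar>) \<longlongrightarrow> 0) (at 0)"
        using tendsto_minus[OF tendsto_rabs[OF tendsto_ident_at[of 0 UNIV]]] by simp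
    qed
    thus ?thesis using z by simp
  qed
qed

locale mosq =
  fixes \<beta>E \<nu>E \<delta>E \<delta>M \<delta>F K \<nu> :: real
  assumes pos: "\<beta>E > 0" "\<nu>E > 0" "\<delta>E > 0" "\<delta>M > 0" "\<delta>F > 0" "K > 0" "0 < \<nu>" "\<nu> < 1"
    and R0gt: "R0 \<beta>E \<nu>E \<delta>E \<delta>F \<nu> > 1"
begin

abbreviation "f \<equiv> mosq_vf \<beta>E \<nu>E \<delta>E \<delta>M \<delta>F K \<nu>"
definition "Es = K * (1 - 1 / R0 \<beta>E \<nu>E \<delta>E \<delta>F \<nu>)"
definition "Ms = (1 - \<nu>) * \<nu>E / \<delta>M * Es"
definition "Fs = \<nu> * \<nu>E / \<delta>F * Es"
definition "xs = (Es, Ms, Fs)"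

definition "a = \<nu>E + \<delta>E"
definition "b = \<nu> * \<nu>E"
definition "bm = (1 - \<nu>) * \<nu>E"

lemma a_pos: "a > 0" and b_pos: "b > 0" and bm_pos: "bm > 0"
  using pos by (auto simp: a_def b_def bm_def)

lemma R0_eq: "R0 \<beta>E \<nu>E \<delta>E \<delta>F \<nu> = \<beta>E * b / (\<delta>F * a)"
  by (simp add: R0_def a_def b_def)

lemma key: "\<beta>E * b > \<delta>F * a"
proof -
  have "\<delta>F * a > 0" using pos a_pos by simp
  thus ?thesis using R0gt unfolding R0_eq by (simp add: divide_simps split: if_splits)
qed

lemma Es_pos: "Es > 0" and Es_lt: "Es < K"
  using R0gt pos by (auto simp: field_simps Es_def)

lemma one_minus: "1 - Es / K = \<delta>F * a / (\<beta>E * b)"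
  using pos a_pos b_pos unfolding Es_def R0_eq by (simp add: field_simps)

lemma rho: "\<beta>E * (1 - Es / K) = \<delta>F * a / b"
  using pos a_pos b_pos unfolding one_minus by (simp add: field_simps)

lemma Fs_eq: "Fs = b / \<delta>F * Es" by (simp add: b_def Fs_def)
lemma Ms_eq: "Ms = bm / \<delta>M * Es" by (simp add: bm_def Ms_def)
lemma Fs_rel: "\<delta>F * Fs = b * Es" using pos by (simp add: b_def Fs_def)
lemma Ms_rel: "\<delta>M * Ms = bm * Es" using pos by (simp add: bm_def Ms_def)
lemma Fs_pos: "Fs > 0" using Es_pos b_pos pos by (simp add: Fs_eq)
lemma Ms_pos: "Ms > 0" using Es_pos bm_pos pos by (simp add: Ms_eq)
lemma eqE: "\<beta>E * Fs * (1 - Es / K) = a * Es"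
proof -
  have "\<beta>E * Fs * (1 - Es / K) = Fs * (\<beta>E * (1 - Es / K))" by simp
  also have "\<dots> = (b / \<delta>F * Es) * (\<delta>F * a / b)" by (simp only: rho Fs_eq)
  also have "\<dots> = a * Es" using pos b_pos by (simp add: field_simps)
  finally show ?thesis .
qed

lemma f_simps:
  "fst (f z) = \<beta>E * snd (snd z) * (1 - fst z / K) - a * fst z"
  "fst (snd (f z)) = bm * fst z - \<delta>M * fst (snd z)"
  "snd (snd (f z)) = b * fst z - \<delta>F * snd (snd z)"
  by (simp_all add: vf_fst vf_fst_snd vf_snd_snd a_def b_def bm_def)

lemma eq_char:
  assumes h: "is_equilibrium f domD (E, M, F)"
  shows "(E, M, F) = 0 \<or> (E, M, F) = xs"
proof -
  have nn: "E \<ge> 0" "M \<ge> 0" "F \<ge> 0" and z: "f (E, M, F) = 0"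
    using h(1) by (auto simp: is_equilibrium_def domD_def)
  have e1: "\<beta>E * F * (1 - E / K) = a * E" and e2: "bm * E = \<delta>M * M" and e3: "b * E = \<delta>F * F"
    using arg_cong[OF z, of fst] arg_cong[OF z, of "\<lambda>z. fst (snd z)"] arg_cong[OF z, of "\<lambda>z. snd (snd z)"]
    by (simp_all add: f_simps)
  have F: "F = b / \<delta>F * E" using e3 pos by (simp add: field_simps)
  have M: "M = bm / \<delta>M * E" using e2 pos by (simp add: field_simps)
  show ?thesis
  proof (cases "E = 0")
    case True thus ?thesis using F M by (simp add: zero_prod_def)
  next
    case False
    have "E * (\<beta>E * (b / \<delta>F) * (1 - E / K)) = E * a" using e1 F by (simp add: algebra_simps)
    hence "E * (\<beta>E * (b / \<delta>F) * (1 - E / K)) = E * a" by simp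
    hence "\<beta>E * (b / \<delta>F) * (1 - E / K) = a" using False by (metis mult_left_cancel)
    hence "1 - E / K = \<delta>F * a / (\<beta>E * b)" using pos b_pos by (simp add: field_simps)
    hence "1 - E / K = 1 - Es / K" using one_minus by simp
    hence "E / K = Es / K" by linarith
    hence "E = Es" using pos(6) by (metis divide_cancel_right less_irrefl)
    hence "(E, M, F) = xs" using F M unfolding xs_def Fs_eq Ms_eq by simp
    thus ?thesis by simp
  qed
qed

lemma eq0: "is_equilibrium f domD 0"
    by (simp add: is_equilibrium_def domD_def zero_prod_def mosq_vf_def)

lemma eqxs: "is_equilibrium f domD xs"
proof -
  have "f xs = (0, 0, 0)"
  proof -
    have "fst (f xs) = 0" using eqE by (simp add: f_simps xs_def)
    moreover have "fst (snd (f xs)) = 0" using Ms_rel by (simp add: f_simps xs_def)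
    moreover have "snd (snd (f xs)) = 0" using Fs_rel by (simp add: f_simps xs_def)
    ultimately show ?thesis by (metis prod.collapse)
  qed
  thus ?thesis
    using Es_pos Fs_pos Ms_pos by (simp add: is_equilibrium_def domD_def zero_prod_def less_imp_le xs_def)
qed

lemma equilibria: "{x. is_equilibrium f domD x} = {0, xs}"
  using eq_char eq0 eqxs by auto

lemma xs_ne: "xs \<noteq> 0"
proof
  assume "xs = 0"
  hence "fst xs = fst (0::state)" by simp
  hence "Es = 0" by (simp add: xs_def)
  thus False using Es_pos by simp
qed

end

lemma negpart_ineq:
  fixes \<beta> K a b c E F R :: real
  assumes p: "\<beta> > 0" "K > 0" "a > 0" "b > 0" "c > 0" and ER: "\<bar>E\<bar> \<le> R"
  shows "2 * min E 0 * (\<beta> * F * (1 - E / K) - a * E) + 2 * min F 0 * (b * E - c * F)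
         \<le> (\<beta> * (1 + R / K) + b) * ((min E 0)\<^sup>2 + (min F 0)\<^sup>2)"
proof -
  define e where "e = min E 0"
  define g where "g = min F 0"
  have R0: "R \<ge> 0" using ER by linarith
  have sq: "2 * (e * g) \<le> e\<^sup>2 + g\<^sup>2" using sum_squares_bound[of e g] by (simp add: power2_eq_square)
  have nn: "0 \<le> e\<^sup>2 + g\<^sup>2" by simp
  have T1: "2 * e * (\<beta> * F * (1 - E / K) - a * E) \<le> \<beta> * (1 + R / K) * (e\<^sup>2 + g\<^sup>2)"
  proof (cases "E < 0")
    case False
    hence "e = 0" unfolding e_def by simp
    thus ?thesis using p R0 nn by simp
  next
    case True
    hence eE: "e = E" unfolding e_def by simp
    have "E / K < 0" using divide_neg_pos[of E K] True p by simp
    hence k1: "1 - E / K \<ge> 1" by simp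
    have "- E \<le> R" using ER by linarith
    hence "(- E) / K \<le> R / K" using p(2) by (intro divide_right_mono) auto
    hence k2: "1 - E / K \<le> 1 + R / K" by simp
    have "0 \<le> a * (E * E)" using p by simp
    hence aE: "2 * e * (- a * E) \<le> 0" using eE by (simp add: algebra_simps)
    show ?thesis
    proof (cases "F < 0")
      case False
      have "E * F \<le> 0" using True False by (simp add: mult_nonpos_nonneg)
      hence "\<beta> * (E * F) \<le> 0" using p by (simp add: mult_nonneg_nonpos)
      moreover have "0 \<le> 1 - E / K" using k1 by linarith
      ultimately have "\<beta> * (E * F) * (1 - E / K) \<le> 0 * (1 - E / K)" by (rule mult_right_mono)
      hence "\<beta> * (E * F) * (1 - E / K) \<le> 0" by simp
      moreover have "2 * e * (\<beta> * F * (1 - E / K)) = 2 * (\<beta> * (E * F) * (1 - E / K))" using eE by (simp add: algebra_simps)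
      ultimately have "2 * e * (\<beta> * F * (1 - E / K)) \<le> 0" by linarith
      moreover have "0 \<le> \<beta> * (1 + R / K) * (e\<^sup>2 + g\<^sup>2)" using p R0 nn by simp
      ultimately show ?thesis using aE by (simp add: algebra_simps)
    next
      case Fn: True
      hence gF: "g = F" unfolding g_def by simp
      have eg: "e * g > 0" using eE gF True Fn by (simp add: mult_neg_neg)
      have "2 * e * (\<beta> * F * (1 - E / K)) = 2 * \<beta> * (e * g) * (1 - E / K)" using gF eE by (simp add: algebra_simps)
      also have "\<dots> \<le> 2 * \<beta> * (e * g) * (1 + R / K)"
        using k2 eg p by (intro mult_left_mono) auto
      also have "\<dots> = \<beta> * (1 + R / K) * (2 * (e * g))" by (simp add: algebra_simps)
      also have "\<dots> \<le> \<beta> * (1 + R / K) * (e\<^sup>2 + g\<^sup>2)"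
        using sq p R0 by (intro mult_left_mono) (auto intro: add_nonneg_nonneg)
      finally show ?thesis using aE by (simp add: algebra_simps)
    qed
  qed
  have T2: "2 * g * (b * E - c * F) \<le> b * (e\<^sup>2 + g\<^sup>2)"
  proof (cases "F < 0")
    case False
    hence "g = 0" unfolding g_def by simp
    thus ?thesis using p nn by simp
  next
    case True
    hence gF: "g = F" unfolding g_def by simp
    have "0 \<le> c * (F * F)" using p by simp
    hence cF: "2 * g * (- c * F) \<le> 0" using gF by (simp add: algebra_simps)
    show ?thesis
    proof (cases "E < 0")
      case False
      have "g * E \<le> 0" using gF True False by (simp add: mult_nonpos_nonneg)
      hence "b * (g * E) \<le> 0" using p by (simp add: mult_nonneg_nonpos)
      hence "2 * g * (b * E) \<le> 0" by (simp add: algebra_simps)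
      moreover have "0 \<le> b * (e\<^sup>2 + g\<^sup>2)" using p nn by simp
      ultimately show ?thesis using cF by (simp add: algebra_simps)
    next
      case En: True
      hence eE: "e = E" unfolding e_def by simp
      have "2 * g * (b * E) = b * (2 * (e * g))" using eE by (simp add: algebra_simps)
      also have "\<dots> \<le> b * (e\<^sup>2 + g\<^sup>2)" using sq p by (intro mult_left_mono) auto
      finally show ?thesis using cF by (simp add: algebra_simps)
    qed
  qed
  have "2 * e * (\<beta> * F * (1 - E / K) - a * E) + 2 * g * (b * E - c * F)
        \<le> \<beta> * (1 + R / K) * (e\<^sup>2 + g\<^sup>2) + b * (e\<^sup>2 + g\<^sup>2)" using T1 T2 by linarith
  thus ?thesis unfolding e_def g_def by (simp add: algebra_simps)
qed

context mosq begin

lemma sol_d: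
  assumes s: "is_solution f x" and t: "t \<ge> 0"
  shows "((\<lambda>t. fst (x t)) has_real_derivative (\<beta>E * snd (snd (x t)) * (1 - fst (x t) / K) - a * fst (x t))) (at t within {0..})"
    and "((\<lambda>t. fst (snd (x t))) has_real_derivative (bm * fst (x t) - \<delta>M * fst (snd (x t)))) (at t within {0..})"
    and "((\<lambda>t. snd (snd (x t))) has_real_derivative (b * fst (x t) - \<delta>F * snd (snd (x t)))) (at t within {0..})"
proof -
  have xv: "(x has_vector_derivative f (x t)) (at t within {0..})"
    using s t unfolding is_solution_def by auto
  have d1: "((\<lambda>t. fst (x t)) has_vector_derivative fst (f (x t))) (at t within {0..})"
    by (rule bounded_linear.has_vector_derivative[OF bounded_linear_fst xv])
  have d2: "((\<lambda>t. snd (x t)) has_vector_derivative snd (f (x t))) (at t within {0..})"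
    by (rule bounded_linear.has_vector_derivative[OF bounded_linear_snd xv])
  have d3: "((\<lambda>t. fst (snd (x t))) has_vector_derivative fst (snd (f (x t)))) (at t within {0..})"
    by (rule bounded_linear.has_vector_derivative[OF bounded_linear_fst d2])
  have d4: "((\<lambda>t. snd (snd (x t))) has_vector_derivative snd (snd (f (x t)))) (at t within {0..})"
    by (rule bounded_linear.has_vector_derivative[OF bounded_linear_snd d2])
  show "((\<lambda>t. fst (x t)) has_real_derivative (\<beta>E * snd (snd (x t)) * (1 - fst (x t) / K) - a * fst (x t))) (at t within {0..})"
    using d1 by (simp add: has_real_derivative_iff_has_vector_derivative f_simps)
  show "((\<lambda>t. fst (snd (x t))) has_real_derivative (bm * fst (x t) - \<delta>M * fst (snd (x t)))) (at t within {0..})"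
    using d3 by (simp add: has_real_derivative_iff_has_vector_derivative f_simps)
  show "((\<lambda>t. snd (snd (x t))) has_real_derivative (b * fst (x t) - \<delta>F * snd (snd (x t)))) (at t within {0..})"
    using d4 by (simp add: has_real_derivative_iff_has_vector_derivative f_simps)
qed

lemma invariant_EF:
  assumes s: "is_solution f x" and x0: "x 0 \<in> domD" and t: "t \<ge> 0"
  shows "fst (x t) \<ge> 0 \<and> snd (snd (x t)) \<ge> 0"
proof -
  define E where "E t = fst (x t)" for t
  define F where "F t = snd (snd (x t))" for t
  have dE: "\<And>t. t \<ge> 0 \<Longrightarrow> (E has_real_derivative (\<beta>E * F t * (1 - E t / K) - a * E t)) (at t within {0..})"
    unfolding E_def F_def by (rule sol_d(1)[OF s])
  have dF: "\<And>t. t \<ge> 0 \<Longrightarrow> (F has_real_derivative (b * E t - \<delta>F * F t)) (at t within {0..})"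
    unfolding E_def F_def by (rule sol_d(3)[OF s])
  obtain R where R: "R \<ge> 0" "\<And>s. s \<in> {0..t} \<Longrightarrow> \<bar>E s\<bar> \<le> R"
    using bounded_on_interval[OF deriv_cont[OF dE], of t] by blast
  define n where "n s = (min (E s) 0)\<^sup>2 + (min (F s) 0)\<^sup>2" for s
  define n' where "n' s = 2 * min (E s) 0 * (\<beta>E * F s * (1 - E s / K) - a * E s) + 2 * min (F s) 0 * (b * E s - \<delta>F * F s)" for s
  have dn: "(n has_real_derivative n' s) (at s within {0..})" if "s \<ge> 0" for s
    unfolding n_def n'_def
    by (rule DERIV_add[OF DERIV_chain2[OF DERIV_negsq dE[OF that]] DERIV_chain2[OF DERIV_negsq dF[OF that]]])
  have n0: "n 0 = 0" using x0 unfolding n_def E_def F_def domD_def by (cases "x 0") auto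
  have "n t = 0"
  proof (rule gronwall0[OF dn n0])
    show "\<And>s. 0 \<le> s \<Longrightarrow> s \<le> t \<Longrightarrow> 0 \<le> n s" unfolding n_def by simp
    show "\<And>s. 0 \<le> s \<Longrightarrow> s \<le> t \<Longrightarrow> n' s \<le> (\<beta>E * (1 + R / K) + b) * n s"
      unfolding n_def n'_def using negpart_ineq[OF pos(1) pos(6) a_pos b_pos pos(5)] R by auto
  qed (use t in auto)
  hence "min (E t) 0 = 0 \<and> min (F t) 0 = 0" unfolding n_def by (simp add: add_nonneg_eq_0_iff)
  thus ?thesis unfolding E_def F_def by (simp add: min_def split: if_splits)
qed

lemma invariant:
  assumes s: "is_solution f x" and x0: "x 0 \<in> domD" and t: "t \<ge> 0"
  shows "x t \<in> domD"
proof -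
  have M: "fst (snd (x t)) \<ge> 0"
  proof (rule barrier_ge[OF sol_d(2)[OF s], of 0 0 t])
    show "0 \<le> fst (snd (x 0))" using x0 unfolding domD_def by (cases "x 0") auto
    fix s assume "s \<ge> 0" "fst (snd (x s)) < 0"
    thus "0 \<le> bm * fst (x s) - \<delta>M * fst (snd (x s))"
    proof -
      have "\<delta>M * fst (snd (x s)) < 0" using pos(4) \<open>fst (snd (x s)) < 0\<close> by (simp add: mult_pos_neg)
      moreover have "bm * fst (x s) \<ge> 0" using invariant_EF[OF s x0 \<open>s \<ge> 0\<close>] bm_pos by simp
      ultimately show ?thesis by linarith
    qed
  qed (use t in auto)
  thus ?thesis using invariant_EF[OF s x0 t] unfolding domD_def by (cases "x t") auto
qed

end

lemma dist3_le: "dist z (w::state) \<le> \<bar>fst z - fst w\<bar> + \<bar>fst (snd z) - fst (snd w)\<bar> + \<bar>snd (snd z) - snd (snd w)\<bar>"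
proof -
  obtain z1 z2 z3 where z: "z = (z1, z2, z3)" by (cases z) auto
  obtain w1 w2 w3 where w: "w = (w1, w2, w3)" by (cases w) auto
  have "dist z w = sqrt ((dist z1 w1)\<^sup>2 + (dist (z2, z3) (w2, w3))\<^sup>2)" unfolding z w by (simp add: dist_Pair_Pair)
  also have "\<dots> \<le> \<bar>dist z1 w1\<bar> + \<bar>dist (z2, z3) (w2, w3)\<bar>" by (rule sqrt_sum_squares_le_sum_abs)
  finally have 1: "dist z w \<le> dist z1 w1 + dist (z2, z3) (w2, w3)" by simp
  have "dist (z2, z3) (w2, w3) = sqrt ((dist z2 w2)\<^sup>2 + (dist z3 w3)\<^sup>2)" by (simp add: dist_Pair_Pair)
  also have "\<dots> \<le> \<bar>dist z2 w2\<bar> + \<bar>dist z3 w3\<bar>" by (rule sqrt_sum_squares_le_sum_abs)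
  finally have 2: "dist (z2, z3) (w2, w3) \<le> dist z2 w2 + dist z3 w3" by simp
  show ?thesis using 1 2 unfolding z w by (simp add: dist_real_def)
qed

lemma dist3_ge: "\<bar>fst z - fst w\<bar> \<le> dist z (w::state)" "\<bar>fst (snd z) - fst (snd w)\<bar> \<le> dist z w"
  "\<bar>snd (snd z) - snd (snd w)\<bar> \<le> dist z w"
proof -
  obtain z1 z2 z3 where z: "z = (z1, z2, z3)" by (cases z) auto
  obtain w1 w2 w3 where w: "w = (w1, w2, w3)" by (cases w) auto
  have d: "dist z w = sqrt ((dist z1 w1)\<^sup>2 + (dist (z2, z3) (w2, w3))\<^sup>2)" unfolding z w by (simp add: dist_Pair_Pair)
  have d2: "dist (z2, z3) (w2, w3) = sqrt ((dist z2 w2)\<^sup>2 + (dist z3 w3)\<^sup>2)" by (simp add: dist_Pair_Pair)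
  have a1: "dist z1 w1 \<le> dist z w" unfolding d by simp
  have a2: "dist (z2, z3) (w2, w3) \<le> dist z w" unfolding d by (metis real_sqrt_sum_squares_ge2)
  have a3: "dist z2 w2 \<le> dist (z2, z3) (w2, w3)" unfolding d2 by simp
  have a4: "dist z3 w3 \<le> dist (z2, z3) (w2, w3)" unfolding d2 by (metis real_sqrt_sum_squares_ge2)
  show "\<bar>fst z - fst w\<bar> \<le> dist z w" using a1 unfolding z w by (simp add: dist_real_def)
  show "\<bar>fst (snd z) - fst (snd w)\<bar> \<le> dist z w" using a2 a3 unfolding z w by (simp add: dist_real_def)
  show "\<bar>snd (snd z) - snd (snd w)\<bar> \<le> dist z w" using a2 a4 unfolding z w by (simp add: dist_real_def)
qed

lemma tendsto_state:
  fixes x :: "real \<Rightarrow> state"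
  assumes h: "\<And>\<epsilon>. \<epsilon> > 0 \<Longrightarrow> \<exists>T. \<forall>t\<ge>T. \<bar>fst (x t) - fst l\<bar> < \<epsilon> \<and> \<bar>fst (snd (x t)) - fst (snd l)\<bar> < \<epsilon> \<and> \<bar>snd (snd (x t)) - snd (snd l)\<bar> < \<epsilon>"
  shows "(x \<longlongrightarrow> l) at_top"
  unfolding tendsto_iff
proof (intro allI impI)
  fix \<epsilon> :: real assume e: "\<epsilon> > 0"
  obtain T where T: "\<And>t. t \<ge> T \<Longrightarrow> \<bar>fst (x t) - fst l\<bar> < \<epsilon>/3 \<and> \<bar>fst (snd (x t)) - fst (snd l)\<bar> < \<epsilon>/3 \<and> \<bar>snd (snd (x t)) - snd (snd l)\<bar> < \<epsilon>/3"
    using h[of "\<epsilon>/3"] e by auto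
  show "\<forall>\<^sub>F t in at_top. dist (x t) l < \<epsilon>"
    unfolding eventually_at_top_linorder
  proof (intro exI allI impI)
    fix t assume "t \<ge> T"
    from T[OF this] have "\<bar>fst (x t) - fst l\<bar> + \<bar>fst (snd (x t)) - fst (snd l)\<bar> + \<bar>snd (snd (x t)) - snd (snd l)\<bar> < \<epsilon>" by linarith
    thus "dist (x t) l < \<epsilon>" using dist3_le[of "x t" l] by linarith
  qed
qed

context mosq begin

definition "lam = \<delta>F * a / b\<^sup>2"
definition "kk = \<delta>F / b"

lemma lam_pos: "lam > 0" using pos a_pos b_pos by (simp add: lam_def)

lemma lyap_identity:
  "2 * (E - Es) * (\<beta>E * F * (1 - E / K) - a * E) + 2 * lam * (F - Fs) * (b * E - \<delta>F * F)
   = - 2 * (a * ((E - Es) - kk * (F - Fs))\<^sup>2 + \<beta>E / K * F * (E - Es)\<^sup>2)"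
proof -
  define p where "p = E - Es"
  define q where "q = F - Fs"
  define \<rho> where "\<rho> = \<delta>F * a / b"
  have r1: "\<beta>E * (1 - Es / K) = \<rho>" unfolding \<rho>_def by (rule rho)
  have r2: "\<rho> * Fs = a * Es" unfolding \<rho>_def Fs_eq using pos b_pos by (simp add: field_simps)
  have r1': "\<rho> = \<beta>E - \<beta>E * Es / K" using r1 by (simp add: right_diff_distrib)
  have "\<rho> * q - a * p - \<beta>E / K * F * p = \<rho> * F - \<rho> * Fs - a * E + a * Es - \<beta>E / K * F * E + \<beta>E / K * F * Es"
    unfolding p_def q_def by (simp add: algebra_simps)
  also have "\<dots> = \<rho> * F - a * E - \<beta>E / K * F * E + \<beta>E / K * F * Es" using r2 by simp
  also have "\<dots> = (\<beta>E - \<beta>E * Es / K) * F - a * E - \<beta>E / K * F * E + \<beta>E / K * F * Es" using r1' by simp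
  also have "\<dots> = \<beta>E * F * (1 - E / K) - a * E" by (simp add: algebra_simps)
  finally have e1: "\<beta>E * F * (1 - E / K) - a * E = \<rho> * q - a * p - \<beta>E / K * F * p" by simp
  have e2: "b * E - \<delta>F * F = b * p - \<delta>F * q"
    unfolding p_def q_def using Fs_rel by (simp add: algebra_simps)
  have l1: "\<rho> + lam * b = 2 * a * kk" unfolding \<rho>_def lam_def kk_def using b_pos by (simp add: field_simps power2_eq_square)
  have l2: "lam * \<delta>F = a * kk\<^sup>2" unfolding lam_def kk_def using b_pos by (simp add: field_simps power2_eq_square)
  have "2 * p * (\<rho> * q - a * p - \<beta>E / K * F * p) + 2 * lam * q * (b * p - \<delta>F * q)
        = - 2 * (a * p\<^sup>2 - (\<rho> + lam * b) * p * q + (lam * \<delta>F) * q\<^sup>2 + \<beta>E / K * F * p\<^sup>2)"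
    by (simp add: algebra_simps power2_eq_square)
  also have "\<dots> = - 2 * (a * (p - kk * q)\<^sup>2 + \<beta>E / K * F * p\<^sup>2)"
    unfolding l1 l2 by (simp add: algebra_simps power2_eq_square)
  finally show ?thesis unfolding e1 e2 p_def q_def .
qed

definition "V z = (fst z - Es)\<^sup>2 + lam * (snd (snd z) - Fs)\<^sup>2"
definition "W z = a * ((fst z - Es) - kk * (snd (snd z) - Fs))\<^sup>2 + \<beta>E / K * snd (snd z) * (fst z - Es)\<^sup>2"

lemma V_deriv:
  assumes s: "is_solution f x" and t: "t \<ge> 0"
  shows "((\<lambda>t. V (x t)) has_real_derivative - 2 * W (x t)) (at t within {0..})"
proof -
  have "((\<lambda>t. (fst (x t) - Es)\<^sup>2 + lam * (snd (snd (x t)) - Fs)\<^sup>2) has_real_derivative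
     2 * (fst (x t) - Es) * (\<beta>E * snd (snd (x t)) * (1 - fst (x t) / K) - a * fst (x t))
     + 2 * lam * (snd (snd (x t)) - Fs) * (b * fst (x t) - \<delta>F * snd (snd (x t)))) (at t within {0..})"
    by (auto intro!: derivative_eq_intros sol_d[OF s t] simp: power2_eq_square algebra_simps)
  thus ?thesis unfolding V_def W_def lyap_identity .
qed

lemma W_nonneg: "snd (snd z) \<ge> 0 \<Longrightarrow> W z \<ge> 0"
  unfolding W_def using a_pos pos by (intro add_nonneg_nonneg mult_nonneg_nonneg) auto

lemma V_nonneg: "V z \<ge> 0" unfolding V_def using lam_pos by simp

lemma V_mono:
  assumes s: "is_solution f x" and x0: "x 0 \<in> domD" and st: "0 \<le> s" "s \<le> t"
  shows "V (x t) \<le> V (x s)"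
proof (rule nonincr[OF V_deriv[OF s], of s])
  fix t assume "t \<ge> s"
  hence "x t \<in> domD" using invariant[OF s x0] st by auto
  hence "snd (snd (x t)) \<ge> 0" unfolding domD_def by (cases "x t") auto
  thus "- 2 * W (x t) \<le> 0" using W_nonneg by simp
qed (use st in auto)

lemma V_bounds: "(fst z - Es)\<^sup>2 \<le> V z" "lam * (snd (snd z) - Fs)\<^sup>2 \<le> V z"
  unfolding V_def using lam_pos by auto

end

lemma sqbound:
  fixes x c A \<delta> :: real
  assumes "x\<^sup>2 \<le> c * \<delta>\<^sup>2" "c \<le> A" "1 \<le> A" "0 \<le> \<delta>"
  shows "\<bar>x\<bar> \<le> A * \<delta>"
proof -
  have "x\<^sup>2 \<le> c * \<delta>\<^sup>2" by (rule assms(1))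
  also have "c * \<delta>\<^sup>2 \<le> A * \<delta>\<^sup>2" using assms by (intro mult_right_mono) auto
  also have "\<dots> \<le> A * A * \<delta>\<^sup>2" using assms by (intro mult_right_mono) auto
  also have "\<dots> = (A * \<delta>)\<^sup>2" by (simp add: power2_eq_square)
  finally have "\<bar>x\<bar>\<^sup>2 \<le> (A * \<delta>)\<^sup>2" by (simp only: power2_abs)
  moreover have "0 \<le> A * \<delta>" using assms by simp
  ultimately show ?thesis by (rule power2_le_imp_le)
qed

lemma sq_lt: assumes "\<bar>x::real\<bar> < d" shows "x\<^sup>2 \<le> d\<^sup>2"
proof -
  have "\<bar>x\<bar>\<^sup>2 \<le> d\<^sup>2" using assms by (intro power_mono) auto
  thus ?thesis by (simp only: power2_abs)
qed

context mosq begin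

lemma xs_comp: "fst xs = Es" "fst (snd xs) = Ms" "snd (snd xs) = Fs" by (simp_all add: xs_def)

lemma stable_xs: "stable_in f domD xs"
  unfolding stable_in_def
proof (intro allI impI)
  fix \<epsilon> :: real assume e: "\<epsilon> > 0"
  define A where "A = (1 + lam) * (1 + 1 / lam)"
  define Bm0 where "Bm0 = 1 + bm * A / \<delta>M"
  define C where "C = 2 * A + Bm0"
  define \<delta> where "\<delta> = \<epsilon> / (2 * C)"
  have lp: "lam > 0" by (rule lam_pos)
  have A1: "1 + lam \<le> A" unfolding A_def using lp by (simp add: field_simps)
  have A2: "(1 + lam) / lam \<le> A" unfolding A_def using lp by (simp add: field_simps)
  have A3: "1 \<le> A" using A1 lp by simp
  have Bm0: "Bm0 > 0" unfolding Bm0_def using bm_pos A3 pos by (simp add: add_pos_nonneg)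
  have C: "C > 0" unfolding C_def using A3 Bm0 by simp
  have d: "\<delta> > 0" unfolding \<delta>_def using e C by simp
  show "\<exists>\<delta>>0. \<forall>x. is_solution f x \<and> x 0 \<in> domD \<and> dist (x 0) xs < \<delta> \<longrightarrow> (\<forall>t>0. dist (x t) xs < \<epsilon>)"
  proof (intro exI[of _ \<delta>] conjI allI impI d)
    fix x t assume h: "is_solution f x \<and> x 0 \<in> domD \<and> dist (x 0) xs < \<delta>" and t: "(0::real) < t"
    hence s: "is_solution f x" and x0: "x 0 \<in> domD" and dx: "dist (x 0) xs < \<delta>" by auto
    have p0: "\<bar>fst (x 0) - Es\<bar> < \<delta>" and r0: "\<bar>fst (snd (x 0)) - Ms\<bar> < \<delta>" and q0: "\<bar>snd (snd (x 0)) - Fs\<bar> < \<delta>"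
      using dist3_ge[of "x 0" xs] dx by (simp_all add: xs_comp)
    have "V (x 0) \<le> \<delta>\<^sup>2 + lam * \<delta>\<^sup>2"
      unfolding V_def using sq_lt[OF p0] sq_lt[OF q0] lp by (intro add_mono mult_left_mono) auto
    hence V0: "V (x 0) \<le> (1 + lam) * \<delta>\<^sup>2" by (simp add: algebra_simps)
    have Vt: "V (x s) \<le> (1 + lam) * \<delta>\<^sup>2" if "s \<ge> 0" for s
      using V_mono[OF s x0, of 0 s] that V0 by simp
    have pb: "\<bar>fst (x s) - Es\<bar> \<le> A * \<delta>" if "s \<ge> 0" for s
      using sqbound[OF order_trans[OF V_bounds(1) Vt[OF that]] A1 A3] d by simp
    have qb: "\<bar>snd (snd (x s)) - Fs\<bar> \<le> A * \<delta>" if "s \<ge> 0" for s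
    proof -
      have "lam * (snd (snd (x s)) - Fs)\<^sup>2 \<le> (1 + lam) * \<delta>\<^sup>2" using V_bounds(2) Vt[OF that] by (rule order_trans)
      hence "(snd (snd (x s)) - Fs)\<^sup>2 \<le> ((1 + lam) / lam) * \<delta>\<^sup>2" using lp by (simp add: field_simps)
      thus ?thesis using sqbound[OF _ A2 A3] d by simp
    qed
    define Bm where "Bm = \<delta> * Bm0"
    have BmE: "Bm = \<delta> + bm * A * \<delta> / \<delta>M" unfolding Bm_def Bm0_def by (simp add: algebra_simps)
    have Bmd: "\<delta> \<le> Bm" unfolding BmE using bm_pos A3 d pos by simp
    have Mdiff: "bm * fst (x s) - \<delta>M * fst (snd (x s)) = bm * (fst (x s) - Es) - \<delta>M * (fst (snd (x s)) - Ms)" for s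
      using Ms_rel by (simp add: algebra_simps)
    have key: "\<delta>M * Bm = \<delta>M * \<delta> + bm * A * \<delta>" unfolding BmE using pos by (simp add: field_simps)
    have Mu: "fst (snd (x t)) \<le> Ms + Bm"
    proof (rule barrier_le[OF sol_d(2)[OF s], of 0])
      show "fst (snd (x 0)) \<le> Ms + Bm" using r0 Bmd by linarith
      fix s :: real assume s0: "0 \<le> s" and gt: "Ms + Bm < fst (snd (x s))"
      have "bm * (fst (x s) - Es) \<le> bm * (A * \<delta>)" using pb[OF s0] bm_pos by (intro mult_left_mono) auto
      moreover have "\<delta>M * Bm < \<delta>M * (fst (snd (x s)) - Ms)" using gt pos by (intro mult_strict_left_mono) auto
      moreover have "\<delta>M * \<delta> > 0" using d pos by simp
      ultimately show "bm * fst (x s) - \<delta>M * fst (snd (x s)) \<le> 0" unfolding Mdiff using key by (simp add: algebra_simps)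
    qed (use t in auto)
    have Ml: "Ms - Bm \<le> fst (snd (x t))"
    proof (rule barrier_ge[OF sol_d(2)[OF s], of 0])
      show "Ms - Bm \<le> fst (snd (x 0))" using r0 Bmd by linarith
      fix s :: real assume s0: "0 \<le> s" and lt: "fst (snd (x s)) < Ms - Bm"
      have "bm * (- (A * \<delta>)) \<le> bm * (fst (x s) - Es)" using pb[OF s0] bm_pos by (intro mult_left_mono) (auto simp: abs_le_iff)
      hence "- bm * (A * \<delta>) \<le> bm * (fst (x s) - Es)" by simp
      moreover have "\<delta>M * (fst (snd (x s)) - Ms) < \<delta>M * (- Bm)" using lt pos by (intro mult_strict_left_mono) auto
      hence "\<delta>M * (fst (snd (x s)) - Ms) < - (\<delta>M * Bm)" by simp
      moreover have "\<delta>M * \<delta> > 0" using d pos by simp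
      ultimately show "0 \<le> bm * fst (x s) - \<delta>M * fst (snd (x s))" unfolding Mdiff using key by (simp add: algebra_simps)
    qed (use t in auto)
    have "dist (x t) xs \<le> A * \<delta> + Bm + A * \<delta>"
    proof -
      have "\<bar>fst (snd (x t)) - Ms\<bar> \<le> Bm" using Mu Ml by (simp add: abs_le_iff)
      moreover have "t \<ge> 0" using t by simp
      ultimately show ?thesis using dist3_le[of "x t" xs] pb[of t] qb[of t] unfolding xs_comp by linarith
    qed
    also have "\<dots> = C * \<delta>" unfolding Bm_def C_def by (simp add: algebra_simps)
    also have "\<dots> = \<epsilon> / 2" unfolding \<delta>_def using C by simp
    finally show "dist (x t) xs < \<epsilon>" using e by simp
  qed
qed

lemma zero_case:
  assumes s: "is_solution f x" and x0: "x 0 \<in> domD" and E0: "fst (x 0) = 0" and F0: "snd (snd (x 0)) = 0"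
  shows "\<And>t. t \<ge> 0 \<Longrightarrow> fst (x t) = 0 \<and> snd (snd (x t)) = 0" and "(x \<longlongrightarrow> 0) at_top"
proof -
  define n where "n t = (fst (x t))\<^sup>2 + (snd (snd (x t)))\<^sup>2" for t
  define n' where "n' t = 2 * fst (x t) * (\<beta>E * snd (snd (x t)) * (1 - fst (x t) / K) - a * fst (x t))
      + 2 * snd (snd (x t)) * (b * fst (x t) - \<delta>F * snd (snd (x t)))" for t
  have dn: "(n has_real_derivative n' t) (at t within {0..})" if "t \<ge> 0" for t
    unfolding n_def n'_def
    by (auto intro!: derivative_eq_intros sol_d[OF s that] simp: power2_eq_square algebra_simps)
  have ineq: "n' t \<le> (\<beta>E + b) * n t" if "t \<ge> 0" for t
  proof -
    define E where "E = fst (x t)"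
    define F where "F = snd (snd (x t))"
    have EF: "E \<ge> 0" "F \<ge> 0" using invariant_EF[OF s x0 that] unfolding E_def F_def by auto
    have "n' t = 2 * (\<beta>E + b) * (E * F) - (2 * \<beta>E / K * (E * E * F) + 2 * a * (E * E) + 2 * \<delta>F * (F * F))"
      unfolding n'_def E_def F_def by (simp add: algebra_simps)
    also have "\<dots> \<le> 2 * (\<beta>E + b) * (E * F)"
    proof -
      have "0 \<le> 2 * \<beta>E / K * (E * E * F)" using EF pos by simp
      moreover have "0 \<le> 2 * a * (E * E)" using a_pos by simp
      moreover have "0 \<le> 2 * \<delta>F * (F * F)" using pos by simp
      ultimately show ?thesis by linarith
    qed
    also have "\<dots> = (\<beta>E + b) * (2 * (E * F))" by simp
    also have "\<dots> \<le> (\<beta>E + b) * (E\<^sup>2 + F\<^sup>2)"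
      using sum_squares_bound[of E F] pos b_pos by (intro mult_left_mono) (auto simp: power2_eq_square)
    finally show ?thesis unfolding n_def E_def F_def .
  qed
  have n0: "n 0 = 0" unfolding n_def using E0 F0 by simp
  show z: "fst (x t) = 0 \<and> snd (snd (x t)) = 0" if t: "t \<ge> 0" for t
  proof -
    have "n t = 0"
      by (rule gronwall0[OF dn n0 _ ineq, of t t]) (auto simp: n_def t)
    thus ?thesis unfolding n_def by (simp add: add_nonneg_eq_0_iff)
  qed
  show "(x \<longlongrightarrow> 0) at_top"
  proof (rule tendsto_state)
    fix \<epsilon> :: real assume e: "\<epsilon> > 0"
    have dM: "((\<lambda>t. fst (snd (x t))) has_real_derivative (bm * fst (x t) - \<delta>M * fst (snd (x t)))) (at t within {0..})" if "t \<ge> 0" for t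
      using sol_d(2)[OF s that] .
    obtain T where T: "\<forall>t\<ge>T. fst (snd (x t)) \<le> \<epsilon> / 2"
    proof (rule exE[OF eventually_below[OF dM order_refl, of "\<delta>M * (\<epsilon>/2)" "\<epsilon>/2"]])
      show "0 < \<delta>M * (\<epsilon> / 2)" using pos e by simp
      fix t :: real assume "0 \<le> t" "\<epsilon> / 2 < fst (snd (x t))"
      thus "bm * fst (x t) - \<delta>M * fst (snd (x t)) \<le> - (\<delta>M * (\<epsilon> / 2))"
        using z[of t] pos by simp
    qed (blast)
    show "\<exists>T. \<forall>t\<ge>T. \<bar>fst (x t) - fst 0\<bar> < \<epsilon> \<and> \<bar>fst (snd (x t)) - fst (snd 0)\<bar> < \<epsilon> \<and> \<bar>snd (snd (x t)) - snd (snd 0)\<bar> < \<epsilon>"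
    proof (intro exI[of _ "max T 0"] allI impI)
      fix t assume "max T 0 \<le> t"
      hence t: "t \<ge> 0" "t \<ge> T" by auto
      have "x t \<in> domD" using invariant[OF s x0 t(1)] .
      hence "fst (snd (x t)) \<ge> 0" unfolding domD_def by (cases "x t") auto
      thus "\<bar>fst (x t) - fst 0\<bar> < \<epsilon> \<and> \<bar>fst (snd (x t)) - fst (snd 0)\<bar> < \<epsilon> \<and> \<bar>snd (snd (x t)) - snd (snd 0)\<bar> < \<epsilon>"
        using z[OF t(1)] T t(2) e by auto
    qed
  qed
qed

end

lemma sq_le_abs: "x\<^sup>2 \<le> c \<Longrightarrow> \<bar>x::real\<bar> \<le> c + 1"
proof (cases "\<bar>x\<bar> \<le> 1")
  case True
  assume "x\<^sup>2 \<le> c"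
  hence "0 \<le> c" by (metis order_trans zero_le_power2)
  thus ?thesis using True by simp
next
  case False
  assume "x\<^sup>2 \<le> c"
  have "\<bar>x\<bar> * 1 \<le> \<bar>x\<bar> * \<bar>x\<bar>" using False by (intro mult_left_mono) auto
  also have "\<dots> = x\<^sup>2" by (simp add: power2_eq_square)
  finally show ?thesis using \<open>x\<^sup>2 \<le> c\<close> by simp
qed

lemma norm_pair_le: "norm (z::real \<times> real) \<le> \<bar>fst z\<bar> + \<bar>snd z\<bar>"
  by (cases z) (simp add: norm_Pair sqrt_sum_squares_le_sum_abs)

context mosq begin

definition "V2 z = (fst z - Es)\<^sup>2 + lam * (snd z - Fs)\<^sup>2"
definition "W2 z = a * ((fst z - Es) - kk * (snd z - Fs))\<^sup>2 + \<beta>E / K * snd z * (fst z - Es)\<^sup>2"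

lemma V2_V: "V z = V2 (fst z, snd (snd z))" and W2_W: "W z = W2 (fst z, snd (snd z))"
  by (simp_all add: V_def V2_def W_def W2_def)

lemma kk_pos: "kk > 0" unfolding kk_def using pos b_pos by simp
lemma kk_Fs: "kk * Fs = Es" unfolding kk_def Fs_eq using pos b_pos by simp

lemma W2_pos:
  assumes "0 \<le> snd z" "0 < V2 z" "0 < fst z + sl * snd z"
  shows "W2 z > 0"
proof (rule ccontr)
  assume "\<not> W2 z > 0"
  have t1: "0 \<le> a * ((fst z - Es) - kk * (snd z - Fs))\<^sup>2" using a_pos by simp
  have t2: "0 \<le> \<beta>E / K * snd z * (fst z - Es)\<^sup>2" using assms pos by simp
  have "W2 z \<le> 0" using \<open>\<not> W2 z > 0\<close> by simp
  hence z1: "a * ((fst z - Es) - kk * (snd z - Fs))\<^sup>2 = 0" and z2: "\<beta>E / K * snd z * (fst z - Es)\<^sup>2 = 0"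
    using t1 t2 unfolding W2_def by linarith+
  have pq: "fst z - Es = kk * (snd z - Fs)" using z1 a_pos by simp
  have "snd z = 0 \<or> fst z - Es = 0" using z2 pos by simp
  thus False
  proof
    assume "snd z = 0"
    hence "fst z = 0" using pq kk_Fs by (simp add: algebra_simps)
    thus False using assms(3) \<open>snd z = 0\<close> by simp
  next
    assume p0: "fst z - Es = 0"
    hence "snd z - Fs = 0" using pq kk_pos by simp
    hence "V2 z = 0" using p0 unfolding V2_def by simp
    thus False using assms(2) by simp
  qed
qed

lemma V_tends0:
  assumes s: "is_solution f x" and x0: "x 0 \<in> domD" and nz: "(fst (x 0), snd (snd (x 0))) \<noteq> (0, 0)"
    and e: "\<epsilon> > 0"
  shows "\<exists>T\<ge>0. \<forall>t\<ge>T. V (x t) < \<epsilon>"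
proof -
  define E where "E t = fst (x t)" for t
  define F where "F t = snd (snd (x t))" for t
  have EF: "E t \<ge> 0" "F t \<ge> 0" if "t \<ge> 0" for t
    using invariant_EF[OF s x0 that] unfolding E_def F_def by auto
  define sl where "sl = (a / b + \<beta>E / \<delta>F) / 2"
  have ab: "a / b < \<beta>E / \<delta>F" using key pos b_pos by (simp add: field_simps)
  have "a < b * (\<beta>E / \<delta>F)" using ab b_pos by (simp add: divide_less_eq mult.commute)
  hence g: "0 < (b * (\<beta>E / \<delta>F) - a) / 2" by simp
  have "b * sl - a = (b * (\<beta>E / \<delta>F) - a) / 2" unfolding sl_def using b_pos by (simp add: field_simps)
  hence sl1: "b * sl - a > 0" using g by simp
  have "\<delta>F * (a / b) < \<beta>E" using ab pos(5) by (simp add: less_divide_eq mult.commute)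
  hence g2: "0 < (\<beta>E - \<delta>F * (a / b)) / 2" by simp
  have "\<beta>E - \<delta>F * sl = (\<beta>E - \<delta>F * (a / b)) / 2" unfolding sl_def using pos(5) by (simp add: field_simps)
  hence sl2: "\<beta>E - \<delta>F * sl > 0" using g2 by simp
  have slp: "sl > 0" unfolding sl_def using a_pos b_pos pos by (simp add: add_pos_pos)
  define \<mu> where "\<mu> = min (b * sl - a) ((\<beta>E - \<delta>F * sl) / sl)"
  have mup: "\<mu> > 0" unfolding \<mu>_def using sl1 sl2 slp by simp
  have mu1: "\<mu> \<le> b * sl - a" and mu2: "\<mu> * sl \<le> \<beta>E - \<delta>F * sl"
    unfolding \<mu>_def using slp by (auto simp: min_def field_simps)
  define \<delta>0 where "\<delta>0 = \<mu> * K * sl / (2 * \<beta>E)"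
  have d0: "\<delta>0 > 0" unfolding \<delta>0_def using mup pos slp by simp
  define l where "l t = E t + sl * F t" for t
  have l0: "l 0 > 0"
  proof -
    have "E 0 \<ge> 0" "F 0 \<ge> 0" using EF[of 0] by auto
    moreover have "E 0 \<noteq> 0 \<or> F 0 \<noteq> 0" using nz unfolding E_def F_def by auto
    ultimately show ?thesis unfolding l_def using slp by (auto simp: add_pos_nonneg add_nonneg_pos)
  qed
  define B where "B = min (l 0) \<delta>0"
  have Bp: "B > 0" unfolding B_def using l0 d0 by simp
  define l' where "l' t = (\<beta>E * F t * (1 - E t / K) - a * E t) + sl * (b * E t - \<delta>F * F t)" for t
  have dl: "(l has_real_derivative l' t) (at t within {0..})" if "t \<ge> 0" for t
    unfolding l_def l'_def E_def F_def
    by (intro DERIV_add DERIV_cmult sol_d[OF s that])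
  have lB: "l t \<ge> B" if "t \<ge> 0" for t
  proof (rule barrier_ge[OF dl order_refl _ _ that])
    show "B \<le> l 0" unfolding B_def by simp
    fix t :: real assume t0: "0 \<le> t" and lt: "l t < B"
    have E0: "E t \<ge> 0" and F0: "F t \<ge> 0" using EF t0 by auto
    have "E t \<le> l t" unfolding l_def using F0 slp by simp
    hence Ed: "E t \<le> \<delta>0" using lt unfolding B_def by simp
    have "l' t = (b * sl - a) * E t + (\<beta>E - \<delta>F * sl) * F t - \<beta>E / K * (F t * E t)"
      unfolding l'_def by (simp add: algebra_simps)
    moreover have "\<mu> * E t \<le> (b * sl - a) * E t" using mu1 E0 by (rule mult_right_mono)
    moreover have "\<mu> * sl * F t \<le> (\<beta>E - \<delta>F * sl) * F t" using mu2 F0 by (rule mult_right_mono)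
    moreover have "\<beta>E / K * (F t * E t) \<le> \<beta>E / K * (F t * \<delta>0)"
      using Ed F0 pos by (intro mult_left_mono) auto
    moreover have "2 * (\<beta>E / K * (F t * \<delta>0)) = \<mu> * sl * F t"
      unfolding \<delta>0_def using pos by (simp add: field_simps)
    moreover have "0 \<le> \<mu> * E t" using mup E0 by simp
    moreover have "0 \<le> \<mu> * sl * F t" using mup slp F0 by simp
    moreover have "\<And>L P Q R X Y Z::real. L = P + Q - R \<Longrightarrow> X \<le> P \<Longrightarrow> Y \<le> Q \<Longrightarrow> R \<le> Z \<Longrightarrow> 2 * Z = Y \<Longrightarrow> 0 \<le> X \<Longrightarrow> 0 \<le> Y \<Longrightarrow> 0 \<le> L"
      by linarith
    ultimately show "0 \<le> l' t" by blast
  qed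
  show ?thesis
  proof (rule ccontr)
    assume neg: "\<not> ?thesis"
    hence big: "V (x t) \<ge> \<epsilon>" if "t \<ge> 0" for t
    proof -
      have "\<not> V (x t) < \<epsilon>"
      proof
        assume "V (x t) < \<epsilon>"
        hence "\<forall>t'\<ge>t. V (x t') < \<epsilon>" using V_mono[OF s x0 that] by (meson le_less_trans)
        thus False using neg that by blast
      qed
      thus ?thesis by simp
    qed
    define V0 where "V0 = V (x 0)"
    define S where "S = {z. 0 \<le> fst z \<and> 0 \<le> snd z \<and> B \<le> fst z + sl * snd z \<and> \<epsilon> \<le> V2 z \<and> V2 z \<le> V0}"
    have mem: "(E t, F t) \<in> S" if "t \<ge> 0" for t
    proof -
      have "V (x t) \<le> V0" unfolding V0_def using V_mono[OF s x0, of 0 t] that by simp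
      thus ?thesis using EF[OF that] lB[OF that] big[OF that] unfolding S_def l_def V2_V E_def F_def by simp
    qed
    have "closed S" unfolding S_def V2_def
      by (intro closed_Collect_conj closed_Collect_le continuous_intros)
    moreover have "bounded S"
    proof -
      have "norm z \<le> (\<bar>Es\<bar> + V0 + 1) + (\<bar>Fs\<bar> + V0 / lam + 1)" if "z \<in> S" for z :: "real \<times> real"
      proof -
        have v: "V2 z \<le> V0" using that unfolding S_def by simp
        have "(fst z - Es)\<^sup>2 \<le> V0" using v lam_pos unfolding V2_def by (smt (verit) mult_nonneg_nonneg zero_le_power2)
        hence 1: "\<bar>fst z - Es\<bar> \<le> V0 + 1" by (rule sq_le_abs)
        have "lam * (snd z - Fs)\<^sup>2 \<le> V0" using v unfolding V2_def by (smt (verit) zero_le_power2)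
        hence "(snd z - Fs)\<^sup>2 \<le> V0 / lam" using lam_pos by (simp add: field_simps)
        hence 2: "\<bar>snd z - Fs\<bar> \<le> V0 / lam + 1" by (rule sq_le_abs)
        show ?thesis using norm_pair_le[of z] 1 2 by linarith
      qed
      thus ?thesis unfolding bounded_iff by blast
    qed
    ultimately have cS: "compact S" using compact_eq_bounded_closed by blast
    have neS: "S \<noteq> {}" using mem[of 0] by auto
    have "continuous_on S W2" unfolding W2_def by (intro continuous_intros)
    then obtain zm where zm: "zm \<in> S" "\<And>y. y \<in> S \<Longrightarrow> W2 zm \<le> W2 y"
      using continuous_attains_inf[OF cS neS] by blast
    define w0 where "w0 = W2 zm"
    have w0: "w0 > 0" unfolding w0_def
    proof (rule W2_pos[of zm sl])
      show "0 \<le> snd zm" using zm unfolding S_def by simp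
      show "0 < V2 zm" using zm e unfolding S_def by simp
      show "0 < fst zm + sl * snd zm" using zm Bp unfolding S_def by simp
    qed
    have Wge: "W (x t) \<ge> w0" if "t \<ge> 0" for t
      using zm(2)[OF mem[OF that]] unfolding w0_def W2_W E_def F_def by simp
    define T where "T = V0 / w0 + 1"
    have "0 \<le> V0 / w0" unfolding V0_def using V_nonneg[of "x 0"] w0 by simp
    hence Tp: "T > 0" unfolding T_def by simp
    obtain \<xi> where xi: "0 < \<xi>" "\<xi> < T" "V (x T) - V (x 0) = (T - 0) * (- 2 * W (x \<xi>))"
      using mvt0[OF V_deriv[OF s], of 0 T] Tp by auto
    have "- 2 * W (x \<xi>) \<le> - 2 * w0" using Wge[of \<xi>] xi by simp
    hence "T * (- 2 * W (x \<xi>)) \<le> T * (- 2 * w0)" by (rule mult_left_mono) (use Tp in simp)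
    moreover have "V (x T) - V (x 0) = T * (- 2 * W (x \<xi>))" using xi(3) by simp
    moreover have "T * (- 2 * w0) = - (2 * w0 * T)" by (simp add: algebra_simps)
    ultimately have "V (x T) \<le> V0 - 2 * w0 * T" unfolding V0_def by linarith
    also have "\<dots> = V0 - 2 * V0 - 2 * w0" unfolding T_def using w0 by (simp add: field_simps)
    also have "\<dots> < 0" using w0 V_nonneg[of "x 0"] unfolding V0_def by simp
    finally show False using V_nonneg[of "x T"] by simp
  qed
qed

end

lemma sq_less_abs: assumes "x\<^sup>2 < y\<^sup>2" "0 \<le> y" shows "\<bar>x::real\<bar> < y"
proof -
  have "\<bar>x\<bar>\<^sup>2 < y\<^sup>2" using assms by (simp only: power2_abs)
  thus ?thesis using assms(2) by (rule power2_less_imp_less)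
qed

context mosq begin

lemma converge:
  assumes s: "is_solution f x" and x0: "x 0 \<in> domD" and nz: "(fst (x 0), snd (snd (x 0))) \<noteq> (0, 0)"
  shows "(x \<longlongrightarrow> xs) at_top"
proof (rule tendsto_state)
  fix \<epsilon> :: real assume e: "\<epsilon> > 0"
  define \<eta> where "\<eta> = min \<epsilon> (\<delta>M * \<epsilon> / (4 * bm))"
  have et: "\<eta> > 0" unfolding \<eta>_def using e pos bm_pos by simp
  have et1: "\<eta> \<le> \<epsilon>" unfolding \<eta>_def by simp
  have et2: "bm * \<eta> \<le> \<delta>M * \<epsilon> / 4"
  proof -
    have "bm * \<eta> \<le> bm * (\<delta>M * \<epsilon> / (4 * bm))" unfolding \<eta>_def using bm_pos by (intro mult_left_mono) auto
    also have "\<dots> = \<delta>M * \<epsilon> / 4" using bm_pos by (simp add: field_simps)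
    finally show ?thesis .
  qed
  define v where "v = min (\<eta>\<^sup>2) (lam * \<eta>\<^sup>2)"
  have vp: "v > 0" unfolding v_def using et lam_pos by simp
  obtain T1 where T1: "T1 \<ge> 0" "\<And>t. t \<ge> T1 \<Longrightarrow> V (x t) < v"
    using V_tends0[OF s x0 nz vp] by blast
  have pE: "\<bar>fst (x t) - Es\<bar> < \<eta>" if "t \<ge> T1" for t
  proof -
    have "(fst (x t) - Es)\<^sup>2 < \<eta>\<^sup>2" using V_bounds(1)[of "x t"] T1(2)[OF that] unfolding v_def by simp
    thus ?thesis using et by (intro sq_less_abs) auto
  qed
  have pF: "\<bar>snd (snd (x t)) - Fs\<bar> < \<eta>" if "t \<ge> T1" for t
  proof -
    have "lam * (snd (snd (x t)) - Fs)\<^sup>2 < lam * \<eta>\<^sup>2" using V_bounds(2)[of "x t"] T1(2)[OF that] unfolding v_def by simp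
    hence "(snd (snd (x t)) - Fs)\<^sup>2 < \<eta>\<^sup>2" using lam_pos by simp
    thus ?thesis using et by (intro sq_less_abs) auto
  qed
  have Mdiff: "bm * fst (x s) - \<delta>M * fst (snd (x s)) = bm * (fst (x s) - Es) - \<delta>M * (fst (snd (x s)) - Ms)" for s
    using Ms_rel by (simp add: algebra_simps)
  have kp: "\<delta>M * \<epsilon> / 4 > 0" using pos e by simp
  obtain T2 where T2: "\<forall>t\<ge>T2. fst (snd (x t)) \<le> Ms + \<epsilon> / 2"
  proof (rule exE[OF eventually_below[OF sol_d(2)[OF s] T1(1) kp]])
    fix t :: real assume t: "T1 \<le> t" "Ms + \<epsilon> / 2 < fst (snd (x t))"
    have "bm * (fst (x t) - Es) \<le> bm * \<eta>" using pE[OF t(1)] bm_pos by (intro mult_left_mono) auto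
    moreover have "\<delta>M * (\<epsilon> / 2) < \<delta>M * (fst (snd (x t)) - Ms)" using t(2) pos by (intro mult_strict_left_mono) auto
    ultimately show "bm * fst (x t) - \<delta>M * fst (snd (x t)) \<le> - (\<delta>M * \<epsilon> / 4)"
      unfolding Mdiff using et2 by simp
  qed blast
  have dmM: "((\<lambda>t. - fst (snd (x t))) has_real_derivative - (bm * fst (x t) - \<delta>M * fst (snd (x t)))) (at t within {0..})"
    if "t \<ge> 0" for t
    using DERIV_minus[OF sol_d(2)[OF s that]] .
  obtain T3 where T3: "\<forall>t\<ge>T3. - fst (snd (x t)) \<le> - Ms + \<epsilon> / 2"
  proof (rule exE[OF eventually_below[OF dmM T1(1) kp]])
    fix t :: real assume t: "T1 \<le> t" "- Ms + \<epsilon> / 2 < - fst (snd (x t))"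
    have "- bm * \<eta> \<le> bm * (fst (x t) - Es)"
    proof -
      have "bm * (- \<eta>) \<le> bm * (fst (x t) - Es)" using pE[OF t(1)] bm_pos by (intro mult_left_mono) auto
      thus ?thesis by simp
    qed
    moreover have "\<delta>M * (fst (snd (x t)) - Ms) < \<delta>M * (- (\<epsilon> / 2))" using t(2) pos by (intro mult_strict_left_mono) auto
    ultimately show "- (bm * fst (x t) - \<delta>M * fst (snd (x t))) \<le> - (\<delta>M * \<epsilon> / 4)"
      unfolding Mdiff using et2 by simp
  qed blast
  show "\<exists>T. \<forall>t\<ge>T. \<bar>fst (x t) - fst xs\<bar> < \<epsilon> \<and> \<bar>fst (snd (x t)) - fst (snd xs)\<bar> < \<epsilon> \<and> \<bar>snd (snd (x t)) - snd (snd xs)\<bar> < \<epsilon>"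
  proof (intro exI[of _ "max T1 (max T2 T3)"] allI impI)
    fix t assume "max T1 (max T2 T3) \<le> t"
    hence t: "T1 \<le> t" "T2 \<le> t" "T3 \<le> t" by auto
    show "\<bar>fst (x t) - fst xs\<bar> < \<epsilon> \<and> \<bar>fst (snd (x t)) - fst (snd xs)\<bar> < \<epsilon> \<and> \<bar>snd (snd (x t)) - snd (snd xs)\<bar> < \<epsilon>"
      using pE[OF t(1)] pF[OF t(1)] T2 T3 t et1 e unfolding xs_comp by (auto simp: abs_less_iff)
  qed
qed

end

lemma integral_upper_cont:
  fixes h :: "real \<Rightarrow> state"
  assumes hc: "continuous_on UNIV h"
  shows "continuous_on UNIV (\<lambda>t. integral {0..max 0 t} h)"
  unfolding continuous_on_eq_continuous_at[OF open_UNIV]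
proof (intro ballI)
  fix t0 :: real assume "t0 \<in> UNIV"
  define T where "T = \<bar>t0\<bar> + 1"
  have c1: "continuous_on {0..T} (\<lambda>r. integral {0..r} h)"
    by (rule indefinite_integral_continuous_1, rule integrable_continuous_real, rule continuous_on_subset[OF hc]) auto
  have c2: "continuous_on {-T<..<T} (\<lambda>t. max 0 t)" by (intro continuous_intros)
  have im: "(\<lambda>t. max 0 t) ` {-T<..<T} \<subseteq> {0..T}" by auto
  have "continuous_on {-T<..<T} (\<lambda>t. integral {0..max 0 t} h)"
    using continuous_on_compose2[OF c1 c2 im] .
  moreover have "t0 \<in> interior {-T<..<T}" unfolding T_def by auto
  ultimately show "isCont (\<lambda>t. integral {0..max 0 t} h) t0" by (rule continuous_on_interior)
qed

lemma exist_ode: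
  fixes g :: "state \<Rightarrow> state" and p :: state
  assumes gc: "continuous_on UNIV g" and gb: "\<And>z. norm (g z) \<le> Gb"
    and gl: "\<And>z w. norm (g z - g w) \<le> Lg * norm (z - w)" and Lp: "Lg > 0"
  shows "\<exists>z. z 0 = p \<and> (\<forall>t\<ge>0. (z has_vector_derivative g (z t)) (at t within {0..}))"
proof -
  define L where "L = 2 * Lg"
  have L: "L > 0" unfolding L_def using Lp by simp
  have Gb: "Gb \<ge> 0" using gb[of 0] norm_ge_zero order_trans by blast
  define zf where "zf u t = p + exp (L * max 0 t) *\<^sub>R apply_bcontfun u t" for u :: "real \<Rightarrow>\<^sub>C state" and t
  define Pf where "Pf u t = exp (- (L * max 0 t)) *\<^sub>R integral {0..max 0 t} (\<lambda>s. g (zf u s))" for u t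
  have zc: "continuous_on UNIV (zf u)" for u
    unfolding zf_def by (intro continuous_intros) auto
  have hc: "continuous_on UNIV (\<lambda>s. g (zf u s))" for u
    using continuous_on_compose2[OF gc zc[of u]] by simp
  have Pc: "continuous_on UNIV (Pf u)" for u
    unfolding Pf_def by (intro continuous_intros integral_upper_cont[OF hc])
  have Pb: "norm (Pf u t) \<le> Gb / L" for u t
  proof -
    define \<tau> where "\<tau> = max 0 t"
    have \<tau>: "\<tau> \<ge> 0" unfolding \<tau>_def by simp
    have "norm (integral {0..\<tau>} (\<lambda>s. g (zf u s))) \<le> integral {0..\<tau>} (\<lambda>s. Gb)"
      by (rule integral_norm_bound_integral)
         (auto intro: integrable_continuous_real continuous_on_subset[OF hc] gb)
    also have "\<dots> = \<tau> * Gb" using \<tau> by simp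
    finally have i: "norm (integral {0..\<tau>} (\<lambda>s. g (zf u s))) \<le> \<tau> * Gb" .
    have "L * \<tau> \<le> exp (L * \<tau>)" using exp_ge_add_one_self[of "L * \<tau>"] by linarith
    hence "\<tau> \<le> exp (L * \<tau>) / L" using L by (simp add: field_simps)
    hence "\<tau> * exp (- (L * \<tau>)) \<le> 1 / L" by (simp add: field_simps exp_minus)
    have "norm (Pf u t) = exp (- (L * \<tau>)) * norm (integral {0..\<tau>} (\<lambda>s. g (zf u s)))"
      unfolding Pf_def \<tau>_def by simp
    also have "\<dots> \<le> exp (- (L * \<tau>)) * (\<tau> * Gb)" using i by (intro mult_left_mono) auto
    also have "\<dots> = (\<tau> * exp (- (L * \<tau>))) * Gb" by simp
    also have "\<dots> \<le> (1 / L) * Gb" using \<open>\<tau> * exp (- (L * \<tau>)) \<le> 1 / L\<close> Gb by (intro mult_right_mono) auto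
    finally show ?thesis by simp
  qed
  have Pin: "Pf u \<in> bcontfun" for u
    unfolding bcontfun_def using Pc[of u] Pb[of u] by (auto simp: bounded_iff)
  define \<Psi> where "\<Psi> u = Bcontfun (Pf u)" for u
  have \<Psi>app: "apply_bcontfun (\<Psi> u) = Pf u" for u unfolding \<Psi>_def using Pin[of u] by (simp add: Bcontfun_inverse)
  have contr: "dist (\<Psi> u) (\<Psi> v) \<le> 1 / 2 * dist u v" for u v
  proof (rule dist_bound)
    fix t :: real
    define D where "D = dist u v"
    define \<tau> where "\<tau> = max 0 t"
    have \<tau>: "\<tau> \<ge> 0" unfolding \<tau>_def by simp
    have D: "D \<ge> 0" unfolding D_def by simp
    have hdiff: "norm (g (zf u s) - g (zf v s)) \<le> Lg * D * exp (L * s)" if "s \<in> {0..\<tau>}" for s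
    proof -
      have "norm (g (zf u s) - g (zf v s)) \<le> Lg * norm (zf u s - zf v s)" by (rule gl)
      also have "zf u s - zf v s = exp (L * s) *\<^sub>R (apply_bcontfun u s - apply_bcontfun v s)"
        unfolding zf_def using that by (simp add: scaleR_diff_right)
      also have "norm \<dots> = exp (L * s) * dist (apply_bcontfun u s) (apply_bcontfun v s)" by (simp add: dist_norm)
      also have "Lg * \<dots> \<le> Lg * (exp (L * s) * D)"
        unfolding D_def using Lp by (intro mult_left_mono dist_bounded) auto
      finally show ?thesis by (simp add: algebra_simps)
    qed
    have ftc: "((\<lambda>s. Lg * D * exp (L * s)) has_integral (D / 2 * exp (L * \<tau>) - D / 2 * exp (L * 0))) {0..\<tau>}"
    proof (rule fundamental_theorem_of_calculus[OF \<tau>])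
      fix s :: real assume "s \<in> {0..\<tau>}"
      have "((\<lambda>s. D / 2 * exp (L * s)) has_real_derivative D / 2 * (exp (L * s) * L)) (at s within {0..\<tau>})"
        by (auto intro!: derivative_eq_intros)
      moreover have "D / 2 * (exp (L * s) * L) = Lg * D * exp (L * s)" unfolding L_def by simp
      ultimately have "((\<lambda>s. D / 2 * exp (L * s)) has_real_derivative Lg * D * exp (L * s)) (at s within {0..\<tau>})"
        by (rule DERIV_cong)
      thus "((\<lambda>s. D / 2 * exp (L * s)) has_vector_derivative Lg * D * exp (L * s)) (at s within {0..\<tau>})"
        by (simp only: has_real_derivative_iff_has_vector_derivative)
    qed
    have int1: "(\<lambda>s. g (zf u s)) integrable_on {0..\<tau>}" "(\<lambda>s. g (zf v s)) integrable_on {0..\<tau>}"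
      by (auto intro: integrable_continuous_real continuous_on_subset[OF hc])
    have "norm (integral {0..\<tau>} (\<lambda>s. g (zf u s)) - integral {0..\<tau>} (\<lambda>s. g (zf v s)))
        = norm (integral {0..\<tau>} (\<lambda>s. g (zf u s) - g (zf v s)))" using integral_diff[OF int1] by simp
    also have "\<dots> \<le> integral {0..\<tau>} (\<lambda>s. Lg * D * exp (L * s))"
    proof (rule integral_norm_bound_integral)
      show "(\<lambda>s. g (zf u s) - g (zf v s)) integrable_on {0..\<tau>}" using int1 by (rule integrable_diff)
      show "(\<lambda>s. Lg * D * exp (L * s)) integrable_on {0..\<tau>}" using ftc by blast
    qed (rule hdiff)
    also have "\<dots> = D / 2 * exp (L * \<tau>) - D / 2 * exp (L * 0)" using ftc by (rule integral_unique)
    also have "\<dots> = D / 2 * exp (L * \<tau>) - D / 2" by simp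
    finally have ni: "norm (integral {0..\<tau>} (\<lambda>s. g (zf u s)) - integral {0..\<tau>} (\<lambda>s. g (zf v s))) \<le> D / 2 * exp (L * \<tau>) - D / 2" .
    have "dist (apply_bcontfun (\<Psi> u) t) (apply_bcontfun (\<Psi> v) t)
        = exp (- (L * \<tau>)) * norm (integral {0..\<tau>} (\<lambda>s. g (zf u s)) - integral {0..\<tau>} (\<lambda>s. g (zf v s)))"
      unfolding \<Psi>app Pf_def \<tau>_def dist_norm by (simp add: scaleR_diff_right[symmetric])
    also have "\<dots> \<le> exp (- (L * \<tau>)) * (D / 2 * exp (L * \<tau>) - D / 2)" using ni by (intro mult_left_mono) auto
    also have "\<dots> = D / 2 - D / 2 * exp (- (L * \<tau>))" by (simp add: algebra_simps exp_minus)
    also have "\<dots> \<le> D / 2" using D by simp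
    finally show "dist (apply_bcontfun (\<Psi> u) t) (apply_bcontfun (\<Psi> v) t) \<le> 1 / 2 * dist u v" unfolding D_def by simp
  qed
  obtain u where u: "\<Psi> u = u" using banach_fix_type[of "1/2" \<Psi>] contr by auto
  define z where "z = zf u"
  have zeq: "z t = p + integral {0..max 0 t} (\<lambda>s. g (z s))" for t
  proof -
    have "apply_bcontfun u t = Pf u t" using \<Psi>app[of u] u by simp
    thus ?thesis unfolding z_def zf_def Pf_def by (simp add: exp_minus)
  qed
  have "z 0 = p" using zeq[of 0] by simp
  moreover have "(z has_vector_derivative g (z t)) (at t within {0..})" if t: "t \<ge> 0" for t
  proof -
    have gz: "continuous_on UNIV (\<lambda>s. g (z s))" unfolding z_def by (rule hc)
    have d1: "((\<lambda>r. p + integral {0..r} (\<lambda>s. g (z s))) has_vector_derivative g (z t)) (at t within {0..t+1})"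
    proof -
      have "((\<lambda>r. integral {0..r} (\<lambda>s. g (z s))) has_vector_derivative g (z t)) (at t within {0..t+1})"
        by (rule integral_has_vector_derivative[OF continuous_on_subset[OF gz]]) (use t in auto)
      from has_vector_derivative_add[OF has_vector_derivative_const this, of p] show ?thesis by simp
    qed
    have "at t within {0..t+1} = at t within {0..}"
      by (rule at_within_nhd[where S="{..<t+1}"]) auto
    hence d2: "((\<lambda>r. p + integral {0..r} (\<lambda>s. g (z s))) has_vector_derivative g (z t)) (at t within {0..})"
      using d1 by simp
    show ?thesis
    proof (rule has_vector_derivative_transform[OF _ _ d2])
      show "t \<in> {0..}" using t by simp
      fix x :: real assume "x \<in> {0..}"
      hence "max 0 x = x" by simp
      thus "z x = p + integral {0..x} (\<lambda>s. g (z s))" using zeq[of x] by metis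
    qed
  qed
  ultimately show ?thesis by blast
qed

definition clp :: "real \<Rightarrow> real \<Rightarrow> real" where "clp r u = min r (max 0 u)"

lemma clp_lip: "r \<ge> 0 \<Longrightarrow> \<bar>clp r u - clp r v\<bar> \<le> \<bar>u - v\<bar>"
  unfolding clp_def min_def max_def by (auto simp: abs_if)

lemma clp_bnd: "r \<ge> 0 \<Longrightarrow> 0 \<le> clp r u \<and> clp r u \<le> r"
  unfolding clp_def by auto

lemma clp_id: "0 \<le> u \<Longrightarrow> u \<le> r \<Longrightarrow> clp r u = u"
  unfolding clp_def by auto

lemma clp_lo: "u < 0 \<Longrightarrow> r \<ge> 0 \<Longrightarrow> clp r u = 0"
  unfolding clp_def by auto

lemma clp_hi: "u > r \<Longrightarrow> r \<ge> 0 \<Longrightarrow> clp r u = r"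
  unfolding clp_def by auto

lemma prod_lip:
  fixes K Rf e1 e2 f1 f2 :: real
  assumes "K > 0" "0 \<le> e1" "e1 \<le> K" "0 \<le> f2" "f2 \<le> Rf"
  shows "\<bar>f1 * (1 - e1 / K) - f2 * (1 - e2 / K)\<bar> \<le> \<bar>f1 - f2\<bar> + Rf / K * \<bar>e1 - e2\<bar>"
proof -
  have eq: "f1 * (1 - e1 / K) - f2 * (1 - e2 / K) = (f1 - f2) * (1 - e1 / K) + (f2 / K) * (e2 - e1)"
    using assms by (simp add: field_simps)
  have a1: "\<bar>1 - e1 / K\<bar> \<le> 1" using assms by (simp add: abs_le_iff divide_le_eq)
  have "\<bar>(f1 - f2) * (1 - e1 / K)\<bar> \<le> \<bar>f1 - f2\<bar>"
    using a1 by (simp add: abs_mult mult_left_le)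
  moreover have "\<bar>(f2 / K) * (e2 - e1)\<bar> \<le> Rf / K * \<bar>e1 - e2\<bar>"
  proof -
    have "\<bar>f2 / K\<bar> \<le> Rf / K" using assms by (simp add: divide_right_mono)
    hence "\<bar>f2 / K\<bar> * \<bar>e2 - e1\<bar> \<le> Rf / K * \<bar>e2 - e1\<bar>" by (intro mult_right_mono) auto
    thus ?thesis by (simp add: abs_mult abs_minus_commute)
  qed
  ultimately show ?thesis unfolding eq by (metis abs_triangle_ineq add_mono order_trans)
qed

lemma abs_lin: "(c1::real) \<ge> 0 \<Longrightarrow> c2 \<ge> 0 \<Longrightarrow> \<bar>c1 * A - c2 * B\<bar> \<le> c1 * \<bar>A\<bar> + c2 * \<bar>B\<bar>"
  using abs_triangle_ineq4[of "c1 * A" "c2 * B"] by (simp add: abs_mult)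

context mosq begin

definition "Rm = bm * K / \<delta>M"
definition "Rf = b * K / \<delta>F"

lemma Rm_pos: "Rm > 0" and Rf_pos: "Rf > 0"
  using pos bm_pos b_pos by (simp_all add: Rm_def Rf_def)

definition "gc z = (\<beta>E * clp Rf (snd (snd z)) * (1 - clp K (fst z) / K) - a * clp K (fst z),
   bm * clp K (fst z) - \<delta>M * clp Rm (fst (snd z)), b * clp K (fst z) - \<delta>F * clp Rf (snd (snd z)))"

lemma gc_cont: "continuous_on UNIV gc"
  unfolding gc_def clp_def using pos by (intro continuous_intros) auto

lemma gc_bound: "norm (gc z) \<le> (\<beta>E * Rf + a * K) + (bm * K + \<delta>M * Rm) + (b * K + \<delta>F * Rf)"
proof -
  define e where "e = clp K (fst z)"
  define m where "m = clp Rm (fst (snd z))"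
  define h where "h = clp Rf (snd (snd z))"
  have e: "0 \<le> e" "e \<le> K" unfolding e_def using clp_bnd pos by auto
  have m: "0 \<le> m" "m \<le> Rm" unfolding m_def using clp_bnd Rm_pos by auto
  have h: "0 \<le> h" "h \<le> Rf" unfolding h_def using clp_bnd Rf_pos by auto
  have k: "0 \<le> 1 - e / K" "1 - e / K \<le> 1" using e pos by (auto simp: divide_le_eq)
  have 1: "\<bar>\<beta>E * h * (1 - e / K) - a * e\<bar> \<le> \<beta>E * Rf + a * K"
  proof -
    have "0 \<le> \<beta>E * h * (1 - e / K)" using pos h k by simp
    moreover have "\<beta>E * h * (1 - e / K) \<le> \<beta>E * Rf * 1" using pos h k by (intro mult_mono) auto
    moreover have "0 \<le> a * e" "a * e \<le> a * K" using a_pos e by auto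
    ultimately show ?thesis by (simp add: abs_le_iff)
  qed
  have 2: "\<bar>bm * e - \<delta>M * m\<bar> \<le> bm * K + \<delta>M * Rm"
  proof -
    have "0 \<le> bm * e" "bm * e \<le> bm * K" using bm_pos e by auto
    moreover have "0 \<le> \<delta>M * m" "\<delta>M * m \<le> \<delta>M * Rm" using pos m by auto
    ultimately show ?thesis by (simp add: abs_le_iff)
  qed
  have 3: "\<bar>b * e - \<delta>F * h\<bar> \<le> b * K + \<delta>F * Rf"
  proof -
    have "0 \<le> b * e" "b * e \<le> b * K" using b_pos e by auto
    moreover have "0 \<le> \<delta>F * h" "\<delta>F * h \<le> \<delta>F * Rf" using pos h by auto
    ultimately show ?thesis by (simp add: abs_le_iff)
  qed
  have "norm (gc z) = dist (gc z) 0" by simp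
  also have "\<dots> \<le> \<bar>fst (gc z) - fst (0::state)\<bar> + \<bar>fst (snd (gc z)) - fst (snd (0::state))\<bar> + \<bar>snd (snd (gc z)) - snd (snd (0::state))\<bar>"
    by (rule dist3_le)
  also have "\<dots> = \<bar>\<beta>E * h * (1 - e / K) - a * e\<bar> + \<bar>bm * e - \<delta>M * m\<bar> + \<bar>b * e - \<delta>F * h\<bar>"
    unfolding gc_def e_def m_def h_def by simp
  finally show ?thesis using 1 2 3 by linarith
qed

definition "Lg = \<beta>E * (1 + Rf / K) + a + bm + \<delta>M + b + \<delta>F"

lemma Lg_pos: "Lg > 0" unfolding Lg_def using pos a_pos b_pos bm_pos Rf_pos
  by (simp add: add_pos_pos)

lemma gc_lip: "norm (gc z - gc w) \<le> Lg * norm (z - w)"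
proof -
  define D where "D = norm (z - w)"
  have dE: "\<bar>fst z - fst w\<bar> \<le> D" and dM: "\<bar>fst (snd z) - fst (snd w)\<bar> \<le> D" and dF: "\<bar>snd (snd z) - snd (snd w)\<bar> \<le> D"
    using dist3_ge[of z w] unfolding D_def dist_norm by auto
  define e1 where "e1 = clp K (fst z)"
  define e2 where "e2 = clp K (fst w)"
  define m1 where "m1 = clp Rm (fst (snd z))"
  define m2 where "m2 = clp Rm (fst (snd w))"
  define h1 where "h1 = clp Rf (snd (snd z))"
  define h2 where "h2 = clp Rf (snd (snd w))"
  have de: "\<bar>e1 - e2\<bar> \<le> D" unfolding e1_def e2_def using clp_lip[of K] pos dE by (meson less_imp_le order_trans)
  have dm: "\<bar>m1 - m2\<bar> \<le> D" unfolding m1_def m2_def using clp_lip[of Rm] Rm_pos dM by (meson less_imp_le order_trans)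
  have dh: "\<bar>h1 - h2\<bar> \<le> D" unfolding h1_def h2_def using clp_lip[of Rf] Rf_pos dF by (meson less_imp_le order_trans)
  have e1: "0 \<le> e1" "e1 \<le> K" unfolding e1_def using clp_bnd pos by auto
  have h2: "0 \<le> h2" "h2 \<le> Rf" unfolding h2_def using clp_bnd Rf_pos by auto
  have D0: "D \<ge> 0" unfolding D_def by simp
  have 1: "\<bar>(\<beta>E * h1 * (1 - e1 / K) - a * e1) - (\<beta>E * h2 * (1 - e2 / K) - a * e2)\<bar> \<le> (\<beta>E * (1 + Rf / K) + a) * D"
  proof -
    have "(\<beta>E * h1 * (1 - e1 / K) - a * e1) - (\<beta>E * h2 * (1 - e2 / K) - a * e2)
        = \<beta>E * (h1 * (1 - e1 / K) - h2 * (1 - e2 / K)) - a * (e1 - e2)" by (simp add: algebra_simps)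
    hence "\<bar>(\<beta>E * h1 * (1 - e1 / K) - a * e1) - (\<beta>E * h2 * (1 - e2 / K) - a * e2)\<bar>
        \<le> \<beta>E * \<bar>h1 * (1 - e1 / K) - h2 * (1 - e2 / K)\<bar> + a * \<bar>e1 - e2\<bar>"
      using abs_lin[of \<beta>E a] pos a_pos by simp
    also have "\<dots> \<le> \<beta>E * (\<bar>h1 - h2\<bar> + Rf / K * \<bar>e1 - e2\<bar>) + a * \<bar>e1 - e2\<bar>"
      using prod_lip[OF pos(6) e1 h2, of h1 e2] pos a_pos by (intro add_mono mult_left_mono) auto
    also have "\<dots> \<le> \<beta>E * (D + Rf / K * D) + a * D"
      using dh de pos a_pos Rf_pos by (intro add_mono mult_left_mono) auto
    also have "\<dots> = (\<beta>E * (1 + Rf / K) + a) * D" by (simp add: algebra_simps)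
    finally show ?thesis .
  qed
  have 2: "\<bar>(bm * e1 - \<delta>M * m1) - (bm * e2 - \<delta>M * m2)\<bar> \<le> (bm + \<delta>M) * D"
  proof -
    have "\<bar>(bm * e1 - \<delta>M * m1) - (bm * e2 - \<delta>M * m2)\<bar> = \<bar>bm * (e1 - e2) - \<delta>M * (m1 - m2)\<bar>" by (simp add: algebra_simps)
    also have "\<dots> \<le> bm * \<bar>e1 - e2\<bar> + \<delta>M * \<bar>m1 - m2\<bar>" using abs_lin[of bm \<delta>M] bm_pos pos by simp
    also have "\<dots> \<le> bm * D + \<delta>M * D" using de dm bm_pos pos by (intro add_mono mult_left_mono) auto
    finally show ?thesis by (simp add: algebra_simps)
  qed
  have 3: "\<bar>(b * e1 - \<delta>F * h1) - (b * e2 - \<delta>F * h2)\<bar> \<le> (b + \<delta>F) * D"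
  proof -
    have "\<bar>(b * e1 - \<delta>F * h1) - (b * e2 - \<delta>F * h2)\<bar> = \<bar>b * (e1 - e2) - \<delta>F * (h1 - h2)\<bar>" by (simp add: algebra_simps)
    also have "\<dots> \<le> b * \<bar>e1 - e2\<bar> + \<delta>F * \<bar>h1 - h2\<bar>" using abs_lin[of b \<delta>F] b_pos pos by simp
    also have "\<dots> \<le> b * D + \<delta>F * D" using de dh b_pos pos by (intro add_mono mult_left_mono) auto
    finally show ?thesis by (simp add: algebra_simps)
  qed
  have "norm (gc z - gc w) = dist (gc z) (gc w)" by (simp add: dist_norm)
  also have "\<dots> \<le> \<bar>fst (gc z) - fst (gc w)\<bar> + \<bar>fst (snd (gc z)) - fst (snd (gc w))\<bar> + \<bar>snd (snd (gc z)) - snd (snd (gc w))\<bar>"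
    by (rule dist3_le)
  also have "\<dots> = \<bar>(\<beta>E * h1 * (1 - e1 / K) - a * e1) - (\<beta>E * h2 * (1 - e2 / K) - a * e2)\<bar>
      + \<bar>(bm * e1 - \<delta>M * m1) - (bm * e2 - \<delta>M * m2)\<bar> + \<bar>(b * e1 - \<delta>F * h1) - (b * e2 - \<delta>F * h2)\<bar>"
    unfolding gc_def e1_def e2_def m1_def m2_def h1_def h2_def by simp
  also have "\<dots> \<le> (\<beta>E * (1 + Rf / K) + a) * D + (bm + \<delta>M) * D + (b + \<delta>F) * D" using 1 2 3 by linarith
  also have "\<dots> = Lg * D" unfolding Lg_def by (simp add: algebra_simps)
  finally show ?thesis unfolding D_def .
qed

end

lemma comp_d:
  assumes xv: "(x has_vector_derivative v) (at t within S)"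
  shows "((\<lambda>t. fst (x t)) has_real_derivative fst v) (at t within S)"
    and "((\<lambda>t. fst (snd (x t))) has_real_derivative fst (snd v)) (at t within S)"
    and "((\<lambda>t. snd (snd (x t))) has_real_derivative snd (snd v)) (at t within S)"
proof -
  have d2: "((\<lambda>t. snd (x t)) has_vector_derivative snd v) (at t within S)"
    by (rule bounded_linear.has_vector_derivative[OF bounded_linear_snd xv])
  show "((\<lambda>t. fst (x t)) has_real_derivative fst v) (at t within S)"
    using bounded_linear.has_vector_derivative[OF bounded_linear_fst xv]
    by (simp add: has_real_derivative_iff_has_vector_derivative)
  show "((\<lambda>t. fst (snd (x t))) has_real_derivative fst (snd v)) (at t within S)"
    using bounded_linear.has_vector_derivative[OF bounded_linear_fst d2]
    by (simp add: has_real_derivative_iff_has_vector_derivative)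
  show "((\<lambda>t. snd (snd (x t))) has_real_derivative snd (snd v)) (at t within S)"
    using bounded_linear.has_vector_derivative[OF bounded_linear_snd d2]
    by (simp add: has_real_derivative_iff_has_vector_derivative)
qed

context mosq begin

lemma exists_sol:
  assumes e: "0 \<le> e" "e \<le> K"
  shows "\<exists>x. is_solution f x \<and> x 0 = (e, 0, 0)"
proof -
  obtain z where z0: "z 0 = (e, 0, 0)" and zd: "\<And>t. t \<ge> 0 \<Longrightarrow> (z has_vector_derivative gc (z t)) (at t within {0..})"
    using exist_ode[OF gc_cont gc_bound gc_lip Lg_pos, of "(e, 0, 0)"] by blast
  note d1 = comp_d(1)[OF zd] and d2 = comp_d(2)[OF zd] and d3 = comp_d(3)[OF zd]
  have K0: "K \<ge> 0" using pos by simp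
  have Rm0: "Rm \<ge> 0" and Rf0: "Rf \<ge> 0" using Rm_pos Rf_pos by auto
  have gc1: "fst (gc w) = \<beta>E * clp Rf (snd (snd w)) * (1 - clp K (fst w) / K) - a * clp K (fst w)" for w
    by (simp add: gc_def)
  have gc2: "fst (snd (gc w)) = bm * clp K (fst w) - \<delta>M * clp Rm (fst (snd w))" for w
    by (simp add: gc_def)
  have gc3: "snd (snd (gc w)) = b * clp K (fst w) - \<delta>F * clp Rf (snd (snd w))" for w
    by (simp add: gc_def)
  have RmK: "bm * K - \<delta>M * Rm = 0" unfolding Rm_def using pos by simp
  have RfK: "b * K - \<delta>F * Rf = 0" unfolding Rf_def using pos by simp
  have Elo: "fst (z t) \<ge> 0" if "t \<ge> 0" for t
  proof (rule barrier_ge[OF d1 order_refl _ _ that])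
    show "0 \<le> fst (z 0)" using z0 e by simp
    fix s :: real assume "0 \<le> s" "fst (z s) < 0"
    hence "clp K (fst (z s)) = 0" using clp_lo K0 by blast
    moreover have "0 \<le> clp Rf (snd (snd (z s)))" using clp_bnd Rf0 by blast
    ultimately show "0 \<le> fst (gc (z s))" unfolding gc1 using pos by simp
  qed
  have Ehi: "fst (z t) \<le> K" if "t \<ge> 0" for t
  proof (rule barrier_le[OF d1 order_refl _ _ that])
    show "fst (z 0) \<le> K" using z0 e by simp
    fix s :: real assume "0 \<le> s" "K < fst (z s)"
    hence "clp K (fst (z s)) = K" using clp_hi K0 by blast
    thus "fst (gc (z s)) \<le> 0" unfolding gc1 using pos a_pos by simp
  qed
  have Mlo: "fst (snd (z t)) \<ge> 0" if "t \<ge> 0" for t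
  proof (rule barrier_ge[OF d2 order_refl _ _ that])
    show "0 \<le> fst (snd (z 0))" using z0 by simp
    fix s :: real assume "0 \<le> s" "fst (snd (z s)) < 0"
    hence "clp Rm (fst (snd (z s))) = 0" using clp_lo Rm0 by blast
    moreover have "0 \<le> clp K (fst (z s))" using clp_bnd K0 by blast
    ultimately show "0 \<le> fst (snd (gc (z s)))" unfolding gc2 using bm_pos by simp
  qed
  have Mhi: "fst (snd (z t)) \<le> Rm" if "t \<ge> 0" for t
  proof (rule barrier_le[OF d2 order_refl _ _ that])
    show "fst (snd (z 0)) \<le> Rm" using z0 Rm0 by simp
    fix s :: real assume "0 \<le> s" "Rm < fst (snd (z s))"
    hence "clp Rm (fst (snd (z s))) = Rm" using clp_hi Rm0 by blast
    moreover have "clp K (fst (z s)) \<le> K" using clp_bnd K0 by blast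
    moreover have "bm * clp K (fst (z s)) \<le> bm * K" using calculation(2) bm_pos by simp
    ultimately show "fst (snd (gc (z s))) \<le> 0" unfolding gc2 using RmK by simp
  qed
  have Flo: "snd (snd (z t)) \<ge> 0" if "t \<ge> 0" for t
  proof (rule barrier_ge[OF d3 order_refl _ _ that])
    show "0 \<le> snd (snd (z 0))" using z0 by simp
    fix s :: real assume "0 \<le> s" "snd (snd (z s)) < 0"
    hence "clp Rf (snd (snd (z s))) = 0" using clp_lo Rf0 by blast
    moreover have "0 \<le> clp K (fst (z s))" using clp_bnd K0 by blast
    ultimately show "0 \<le> snd (snd (gc (z s)))" unfolding gc3 using b_pos by simp
  qed
  have Fhi: "snd (snd (z t)) \<le> Rf" if "t \<ge> 0" for t
  proof (rule barrier_le[OF d3 order_refl _ _ that])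
    show "snd (snd (z 0)) \<le> Rf" using z0 Rf0 by simp
    fix s :: real assume "0 \<le> s" "Rf < snd (snd (z s))"
    hence "clp Rf (snd (snd (z s))) = Rf" using clp_hi Rf0 by blast
    moreover have "clp K (fst (z s)) \<le> K" using clp_bnd K0 by blast
    moreover have "b * clp K (fst (z s)) \<le> b * K" using calculation(2) b_pos by simp
    ultimately show "snd (snd (gc (z s))) \<le> 0" unfolding gc3 using RfK by simp
  qed
  have gf: "gc (z t) = f (z t)" if "t \<ge> 0" for t
  proof -
    have c1: "clp K (fst (z t)) = fst (z t)" using Elo[OF that] Ehi[OF that] by (rule clp_id)
    have c2: "clp Rm (fst (snd (z t))) = fst (snd (z t))" using Mlo[OF that] Mhi[OF that] by (rule clp_id)
    have c3: "clp Rf (snd (snd (z t))) = snd (snd (z t))" using Flo[OF that] Fhi[OF that] by (rule clp_id)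
    show ?thesis
      by (rule prod_eqI, simp add: gc1 f_simps c1 c3, rule prod_eqI) (simp_all add: gc2 gc3 f_simps c1 c2 c3)
  qed
  have "is_solution f z" unfolding is_solution_def using zd gf by simp
  thus ?thesis using z0 by blast
qed

lemma unstable0: "\<not> stable_in f domD 0"
proof
  assume st: "stable_in f domD 0"
  have Eh: "Es / 2 > 0" using Es_pos by simp
  obtain \<delta> where d: "\<delta> > 0" and hd: "\<And>x. is_solution f x \<and> x 0 \<in> domD \<and> dist (x 0) 0 < \<delta> \<Longrightarrow> (\<forall>t>0. dist (x t) 0 < Es / 2)"
    using st Eh unfolding stable_in_def by meson
  define e where "e = min (\<delta> / 2) K"
  have e: "0 < e" "e \<le> K" "e < \<delta>" unfolding e_def using d pos by auto
  obtain x where s: "is_solution f x" and x0: "x 0 = (e, 0, 0)" using exists_sol[of e] e by auto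
  have xD: "x 0 \<in> domD" using x0 e unfolding domD_def by simp
  have "norm (e, (0::real), (0::real)) = e" using e by (simp add: norm_Pair)
  hence dx0: "dist (x 0) 0 < \<delta>" using x0 e by (simp add: dist_norm)
  have nz: "(fst (x 0), snd (snd (x 0))) \<noteq> (0, 0)" using x0 e by simp
  have conv: "(x \<longlongrightarrow> xs) at_top" by (rule converge[OF s xD nz])
  then have "\<forall>\<^sub>F t in at_top. dist (x t) xs < Es / 2" using Eh by (rule tendstoD)
  then obtain T where T: "\<And>t. t \<ge> T \<Longrightarrow> dist (x t) xs < Es / 2" unfolding eventually_at_top_linorder by blast
  define t where "t = max T 1"
  have t: "t > 0" "t \<ge> T" unfolding t_def by auto
  have "\<bar>fst (x t) - Es\<bar> < Es / 2" using dist3_ge(1)[of "x t" xs] T[OF t(2)] unfolding xs_comp by linarith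
  moreover have "\<bar>fst (x t) - fst (0::state)\<bar> < Es / 2" using dist3_ge(1)[of "x t" 0] hd[of x] s xD dx0 t by fastforce
  ultimately show False by simp
qed

end

theorem theorem1:
  fixes \<beta>E \<nu>E \<delta>E \<delta>M \<delta>F K \<nu> :: real
  assumes "\<beta>E > 0" "\<nu>E > 0" "\<delta>E > 0" "\<delta>M > 0" "\<delta>F > 0" "K > 0"
    and "0 < \<nu>" "\<nu> < 1"
    and R0gt: "R0 \<beta>E \<nu>E \<delta>E \<delta>F \<nu> > 1"
  defines "f \<equiv> mosq_vf \<beta>E \<nu>E \<delta>E \<delta>M \<delta>F K \<nu>"
    and "Es \<equiv> K * (1 - 1 / R0 \<beta>E \<nu>E \<delta>E \<delta>F \<nu>)"
  defines "xs \<equiv> (Es, (1 - \<nu>) * \<nu>E / \<delta>M * Es, \<nu> * \<nu>E / \<delta>F * Es)"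
  shows "{x. is_equilibrium f domD x} = {0, xs} \<and> xs \<noteq> 0
    \<and> stable_in f domD xs
    \<and> (\<forall>x. is_solution f x \<and> x 0 \<in> domD \<longrightarrow>
          ((x \<longlongrightarrow> xs) at_top \<longleftrightarrow> (fst (x 0), snd (snd (x 0))) \<noteq> (0, 0)))
    \<and> \<not> stable_in f domD 0
    \<and> (\<forall>x. is_solution f x \<and> x 0 \<in> domD \<and> fst (x 0) = 0 \<and> snd (snd (x 0)) = 0
          \<longrightarrow> (x \<longlongrightarrow> 0) at_top)"
proof -
  interpret m: mosq \<beta>E \<nu>E \<delta>E \<delta>M \<delta>F K \<nu>
    by unfold_locales (use assms(1-8) R0gt in auto)
  have xse: "xs = m.xs" unfolding xs_def Es_def m.xs_def m.Ms_def m.Fs_def m.Es_def ..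
  have iff: "(x \<longlongrightarrow> m.xs) at_top \<longleftrightarrow> (fst (x 0), snd (snd (x 0))) \<noteq> (0, 0)"
    if s: "is_solution m.f x" and x0: "x 0 \<in> domD" for x
  proof
    assume conv: "(x \<longlongrightarrow> m.xs) at_top"
    show "(fst (x 0), snd (snd (x 0))) \<noteq> (0, 0)"
    proof
      assume "(fst (x 0), snd (snd (x 0))) = (0, 0)"
      hence E0: "fst (x 0) = 0" and F0: "snd (snd (x 0)) = 0" by auto
      have "((\<lambda>t. fst (x t)) \<longlongrightarrow> fst m.xs) at_top" using tendsto_fst[OF conv] .
      moreover have "((\<lambda>t. fst (x t)) \<longlongrightarrow> 0) at_top"
      proof (rule tendsto_eventually)
        show "\<forall>\<^sub>F t in at_top. fst (x t) = 0"
          unfolding eventually_at_top_linorder using m.zero_case(1)[OF s x0 E0 F0] by blast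
      qed
      ultimately have "fst m.xs = 0" using tendsto_unique trivial_limit_at_top_linorder by blast
      thus False using m.Es_pos m.xs_comp by simp
    qed
  next
    assume "(fst (x 0), snd (snd (x 0))) \<noteq> (0, 0)"
    thus "(x \<longlongrightarrow> m.xs) at_top" by (rule m.converge[OF s x0])
  qed
  show ?thesis
    unfolding f_def xse
    using m.equilibria m.xs_ne m.stable_xs iff m.unstable0 m.zero_case(2) by blast
qed

end
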